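(* The set of extreme points of the convex set $\hat{\mathcal S}(\mathcal H\otimes\mathcal J)$ of cross states equals the set of pure cross states, i.e. $\operatorname{ext}(\hat{\mathcal S}(\mathcal H\otimes\mathcal J))=\mathcal P(\mathcal H\otimes\mathcal J)\cap\hat{\mathcal S}(\mathcal H\otimes\mathcal J)$.
   Context: $\mathcal H,\mathcal J$ separable complex Hilbert spaces; $\mathcal P(\cdot)$ rank-one orthogonal projections; trace norm $\|\cdot\|_1$. $\hat{\mathcal S}(\mathcal H\otimes\mathcal J)$ is the set of density operators $D$ on $\mathcal H\otimes\mathcal J$ admitting an expansion $D=\sum_kr_kX_k\otimes Y_k$ (trace-norm convergent) with $r_k\ge0$, $\sum r_k<\infty$, $X_k,Y_k$ trace class, $\|X_k\|_1\|Y_k\|_1=1$; it is a convex set. *)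

theory Defs
  imports "HOL-Analysis.Analysis"
begin

text \<open>Concrete model: a separable complex Hilbert space is represented as
  l2(A) for a countable index type A; vectors are functions A => complex with
  square-summable modulus; bounded operators are represented by their matrices
  M x y = <delta_x, T delta_y>; H (x) J is l2(A x B).\<close>

definition is_ell2 :: "('a \<Rightarrow> complex) \<Rightarrow> bool" where
  "is_ell2 f \<longleftrightarrow> (\<lambda>x. (cmod (f x))\<^sup>2) summable_on UNIV"

definition ell2_norm :: "('a \<Rightarrow> complex) \<Rightarrow> real" where
  "ell2_norm f = sqrt (\<Sum>\<^sub>\<infinity>x. (cmod (f x))\<^sup>2)"

definition cinner :: "('a \<Rightarrow> complex) \<Rightarrow> ('a \<Rightarrow> complex) \<Rightarrow> complex" where
  "cinner f g = (\<Sum>\<^sub>\<infinity>x. cnj (f x) * g x)"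

definition mat_apply :: "('a \<Rightarrow> 'a \<Rightarrow> complex) \<Rightarrow> ('a \<Rightarrow> complex) \<Rightarrow> ('a \<Rightarrow> complex)" where
  "mat_apply M f = (\<lambda>x. \<Sum>\<^sub>\<infinity>y. M x y * f y)"

definition bounded_mat :: "('a \<Rightarrow> 'a \<Rightarrow> complex) \<Rightarrow> bool" where
  "bounded_mat M \<longleftrightarrow> (\<forall>x. is_ell2 (\<lambda>y. M x y)) \<and>
     (\<exists>C. \<forall>f. is_ell2 f \<longrightarrow> is_ell2 (mat_apply M f) \<and>
                ell2_norm (mat_apply M f) \<le> C * ell2_norm f)"

definition orthonormal_fam :: "nat \<Rightarrow> (nat \<Rightarrow> 'a \<Rightarrow> complex) \<Rightarrow> bool" where
  "orthonormal_fam n e \<longleftrightarrow> (\<forall>i<n. is_ell2 (e i)) \<and>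
     (\<forall>i<n. \<forall>j<n. cinner (e i) (e j) = (if i = j then 1 else 0))"

definition trace_norm_set :: "('a \<Rightarrow> 'a \<Rightarrow> complex) \<Rightarrow> real set" where
  "trace_norm_set M = {(\<Sum>i<n. cmod (cinner (f i) (mat_apply M (e i)))) | n e f.
      orthonormal_fam n e \<and> orthonormal_fam n f}"

definition trace_class :: "('a \<Rightarrow> 'a \<Rightarrow> complex) \<Rightarrow> bool" where
  "trace_class M \<longleftrightarrow> bounded_mat M \<and> bdd_above (trace_norm_set M)"

definition trace_norm :: "('a \<Rightarrow> 'a \<Rightarrow> complex) \<Rightarrow> real" where
  "trace_norm M = Sup (trace_norm_set M)"

definition trace :: "('a \<Rightarrow> 'a \<Rightarrow> complex) \<Rightarrow> complex" where
  "trace M = (\<Sum>\<^sub>\<infinity>x. M x x)"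

definition density_op :: "('a \<Rightarrow> 'a \<Rightarrow> complex) \<Rightarrow> bool" where
  "density_op D \<longleftrightarrow> trace_class D \<and>
     (\<forall>f. is_ell2 f \<longrightarrow> Im (cinner f (mat_apply D f)) = 0 \<and> Re (cinner f (mat_apply D f)) \<ge> 0) \<and>
     trace D = 1"

definition tensor_op :: "('a \<Rightarrow> 'a \<Rightarrow> complex) \<Rightarrow> ('b \<Rightarrow> 'b \<Rightarrow> complex) \<Rightarrow>
    ('a \<times> 'b \<Rightarrow> 'a \<times> 'b \<Rightarrow> complex)" where
  "tensor_op X Y = (\<lambda>(a, b) (a', b'). X a a' * Y b b')"

text \<open>Cross states: density operators D = sum_k r_k X_k (x) Y_k (trace-norm
  convergent), r_k \<ge> 0, sum r_k < infinity, ||X_k||_1 ||Y_k||_1 = 1. A countable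
  (possibly finite) expansion is indexed by nat (finite ones padded with r_k = 0).\<close>
definition cross_states :: "('a \<times> 'b \<Rightarrow> 'a \<times> 'b \<Rightarrow> complex) set" where
  "cross_states = {D. density_op D \<and>
     (\<exists>(r :: nat \<Rightarrow> real) (X :: nat \<Rightarrow> 'a \<Rightarrow> 'a \<Rightarrow> complex) (Y :: nat \<Rightarrow> 'b \<Rightarrow> 'b \<Rightarrow> complex).
        (\<forall>k. r k \<ge> 0) \<and> summable r \<and>
        (\<forall>k. trace_class (X k) \<and> trace_class (Y k) \<and> trace_norm (X k) * trace_norm (Y k) = 1) \<and>
        (\<lambda>n. trace_norm (\<lambda>u v. D u v - (\<Sum>k<n. complex_of_real (r k) * tensor_op (X k) (Y k) u v)))
          \<longlonglongrightarrow> 0)}"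

definition rank_one_projs :: "('a \<Rightarrow> 'a \<Rightarrow> complex) set" where
  "rank_one_projs = {P. \<exists>\<psi>. is_ell2 \<psi> \<and> ell2_norm \<psi> = 1 \<and> P = (\<lambda>x y. \<psi> x * cnj (\<psi> y))}"

definition ext_points :: "('a \<Rightarrow> 'a \<Rightarrow> complex) set \<Rightarrow> ('a \<Rightarrow> 'a \<Rightarrow> complex) set" where
  "ext_points S = {D \<in> S. \<forall>D1\<in>S. \<forall>D2\<in>S. \<forall>t::real. 0 < t \<and> t < 1 \<and>
       D = (\<lambda>x y. complex_of_real t * D1 x y + complex_of_real (1 - t) * D2 x y)
       \<longrightarrow> D1 = D \<and> D2 = D}"

end

theory Submission
  imports Defs
begin


definition nsq :: "('a \<Rightarrow> complex) \<Rightarrow> real" where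
  "nsq f = (\<Sum>\<^sub>\<infinity>x. (cmod (f x))\<^sup>2)"

lemma ell2_norm_nsq: "ell2_norm f = sqrt (nsq f)"
  by (simp add: ell2_norm_def nsq_def)

lemma nsq_nonneg: "nsq f \<ge> 0"
  unfolding nsq_def by (simp add: infsum_nonneg)

lemma ell2_norm_nonneg: "ell2_norm f \<ge> 0"
  by (simp add: ell2_norm_nsq nsq_nonneg)

lemma ell2_norm_sq: "(ell2_norm f)\<^sup>2 = nsq f"
  by (simp add: ell2_norm_nsq nsq_nonneg)

lemma prod_le_sq: "cmod a * cmod b \<le> ((cmod a)\<^sup>2 + (cmod b)\<^sup>2) / 2"
proof -
  have "0 \<le> (cmod a - cmod b)\<^sup>2" by simp
  then show ?thesis by (simp add: power2_eq_square algebra_simps)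
qed

lemma ell2_prod_abs_summable:
  assumes "is_ell2 f" "is_ell2 g"
  shows "(\<lambda>x. cmod (f x) * cmod (g x)) summable_on UNIV"
proof -
  have s: "(\<lambda>x. ((cmod (f x))\<^sup>2 + (cmod (g x))\<^sup>2) * (1/2)) summable_on UNIV"
    using assms unfolding is_ell2_def
    by (intro summable_on_add summable_on_cmult_left) auto
  show ?thesis
    apply (rule summable_on_comparison_test[OF s])
    using prod_le_sq by auto
qed

lemma ell2_inner_summable:
  assumes "is_ell2 f" "is_ell2 g"
  shows "(\<lambda>x. cnj (f x) * g x) summable_on UNIV"
proof -
  have "(\<lambda>x. norm (cnj (f x) * g x)) summable_on UNIV"
    using ell2_prod_abs_summable[OF assms] by (simp add: norm_mult)
  then show ?thesis using summable_on_iff_abs_summable_on_complex by blast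
qed

lemma ell2_mult_summable:
  assumes "is_ell2 f" "is_ell2 g"
  shows "(\<lambda>x. f x * g x) summable_on UNIV"
proof -
  have "(\<lambda>x. norm (f x * g x)) summable_on UNIV"
    using ell2_prod_abs_summable[OF assms] by (simp add: norm_mult)
  then show ?thesis using summable_on_iff_abs_summable_on_complex by blast
qed

lemma is_ell2_cnj: "is_ell2 f \<Longrightarrow> is_ell2 (\<lambda>x. cnj (f x))"
  by (simp add: is_ell2_def)

lemma is_ell2_scale: "is_ell2 f \<Longrightarrow> is_ell2 (\<lambda>x. c * f x)"
  unfolding is_ell2_def by (simp add: norm_mult power_mult_distrib summable_on_cmult_right)

lemma is_ell2_add:
  assumes "is_ell2 f" "is_ell2 g" shows "is_ell2 (\<lambda>x. f x + g x)"
proof -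
  have s: "(\<lambda>x. 2 * (cmod (f x))\<^sup>2 + 2 * (cmod (g x))\<^sup>2) summable_on UNIV"
    using assms unfolding is_ell2_def
    by (intro summable_on_add summable_on_cmult_right) auto
  have b: "(cmod (a + b))\<^sup>2 \<le> 2 * (cmod a)\<^sup>2 + 2 * (cmod b)\<^sup>2" for a b :: complex
  proof -
    have "(cmod (a + b))\<^sup>2 \<le> (cmod a + cmod b)\<^sup>2"
      by (simp add: norm_triangle_ineq power_mono)
    also have "\<dots> \<le> 2 * (cmod a)\<^sup>2 + 2 * (cmod b)\<^sup>2"
      using prod_le_sq[of a b] by (simp add: power2_eq_square algebra_simps)
    finally show ?thesis .
  qed
  show ?thesis unfolding is_ell2_def
    by (rule summable_on_comparison_test[OF s]) (use b in auto)
qed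

lemma is_ell2_diff:
  assumes "is_ell2 f" "is_ell2 g" shows "is_ell2 (\<lambda>x. f x - g x)"
  using is_ell2_add[OF assms(1) is_ell2_scale[OF assms(2), of "-1"]] by simp

lemma is_ell2_zero: "is_ell2 (\<lambda>x. 0)"
  by (simp add: is_ell2_def)

definition delta :: "'a \<Rightarrow> 'a \<Rightarrow> complex" where
  "delta a = (\<lambda>x. if x = a then 1 else 0)"

lemma is_ell2_finite_support:
  assumes "finite {x. f x \<noteq> 0}" shows "is_ell2 f"
  unfolding is_ell2_def
  by (rule finite_nonzero_values_imp_summable_on) (use assms in \<open>auto\<close>)

lemma is_ell2_delta: "is_ell2 (delta a)"
  by (rule is_ell2_finite_support) (auto simp: delta_def)

lemma is_ell2_sum:
  assumes "\<And>i. i \<in> I \<Longrightarrow> is_ell2 (f i)"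
  shows "is_ell2 (\<lambda>x. \<Sum>i\<in>I. f i x)"
  using assms
proof (induction I rule: infinite_finite_induct)
  case (infinite A) then show ?case by (simp add: is_ell2_zero)
next
  case empty then show ?case by (simp add: is_ell2_zero)
next
  case (insert i F)
  then show ?case by (simp add: is_ell2_add)
qed

lemma infsum_sum_swap:
  fixes f :: "'i \<Rightarrow> 'a \<Rightarrow> complex"
  assumes "\<And>i. i \<in> I \<Longrightarrow> f i summable_on A"
  shows "(\<Sum>\<^sub>\<infinity>x\<in>A. \<Sum>i\<in>I. f i x) = (\<Sum>i\<in>I. \<Sum>\<^sub>\<infinity>x\<in>A. f i x)"
    and "(\<lambda>x. \<Sum>i\<in>I. f i x) summable_on A"
  using assms
proof (induction I rule: infinite_finite_induct)
  case (infinite A)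
  { case 1 then show ?case using infinite by simp }
  { case 2 then show ?case using infinite by simp }
next
  case empty
  { case 1 then show ?case by simp }
  { case 2 then show ?case by simp }
next
  case (insert i F)
  { case 1 then show ?case using insert by (simp add: infsum_add summable_on_add) }
  { case 2 then show ?case using insert by (simp add: summable_on_add) }
qed

lemma cinner_add_right:
  assumes "is_ell2 f" "is_ell2 g" "is_ell2 h"
  shows "cinner f (\<lambda>x. g x + h x) = cinner f g + cinner f h"
  unfolding cinner_def
  using infsum_add[OF ell2_inner_summable[OF assms(1,2)] ell2_inner_summable[OF assms(1,3)]]
  by (simp add: distrib_left)

lemma cinner_scale_right: "cinner f (\<lambda>x. c * g x) = c * cinner f g"
  unfolding cinner_def
  using infsum_cmult_right'[of c "\<lambda>x. cnj (f x) * g x" UNIV]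
  by (simp add: algebra_simps)

lemma cinner_scale_left: "cinner (\<lambda>x. c * f x) g = cnj c * cinner f g"
  unfolding cinner_def
  using infsum_cmult_right'[of "cnj c" "\<lambda>x. cnj (f x) * g x" UNIV]
  by (simp add: algebra_simps)

lemma cinner_add_left:
  assumes "is_ell2 f" "is_ell2 g" "is_ell2 h"
  shows "cinner (\<lambda>x. g x + h x) f = cinner g f + cinner h f"
  unfolding cinner_def
  using infsum_add[OF ell2_inner_summable[OF assms(2,1)] ell2_inner_summable[OF assms(3,1)]]
  by (simp add: distrib_right)

lemma cinner_diff_right:
  assumes "is_ell2 f" "is_ell2 g" "is_ell2 h"
  shows "cinner f (\<lambda>x. g x - h x) = cinner f g - cinner f h"
  using cinner_add_right[OF assms(1,2) is_ell2_scale[OF assms(3), of "-1"]]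
        cinner_scale_right[of f "-1" h] by simp

lemma cinner_diff_left:
  assumes "is_ell2 f" "is_ell2 g" "is_ell2 h"
  shows "cinner (\<lambda>x. g x - h x) f = cinner g f - cinner h f"
  using cinner_add_left[OF assms(1,2) is_ell2_scale[OF assms(3), of "-1"]]
        cinner_scale_left[of "-1" h f] by simp

lemma cinner_commute: "cinner g f = cnj (cinner f g)"
proof -
  have "cnj (cinner f g) = (\<Sum>\<^sub>\<infinity>x. cnj (cnj (f x) * g x))"
    unfolding cinner_def by (simp only: infsum_cnj)
  then show ?thesis unfolding cinner_def by (simp add: mult.commute)
qed

lemma cinner_self: "cinner f f = of_real (nsq f)"
proof -
  have "cinner f f = (\<Sum>\<^sub>\<infinity>x. of_real ((cmod (f x))\<^sup>2))"
    unfolding cinner_def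
    by (rule infsum_cong) (simp add: complex_norm_square mult.commute del: of_real_power)
  also have "\<dots> = of_real (nsq f)"
  proof (cases "(\<lambda>x. (cmod (f x))\<^sup>2) summable_on UNIV")
    case True
    then have "((\<lambda>x. (cmod (f x))\<^sup>2) has_sum (\<Sum>\<^sub>\<infinity>x. (cmod (f x))\<^sup>2)) UNIV"
      by simp
    then have "((\<lambda>x. complex_of_real ((cmod (f x))\<^sup>2)) has_sum complex_of_real (\<Sum>\<^sub>\<infinity>x. (cmod (f x))\<^sup>2)) UNIV"
      by (rule has_sum_of_real)
    then show ?thesis unfolding nsq_def by (rule infsumI)
  next
    case False
    then have "\<not> (\<lambda>x. complex_of_real ((cmod (f x))\<^sup>2)) summable_on UNIV"
      using summable_on_Re[of "\<lambda>x. complex_of_real ((cmod (f x))\<^sup>2)" UNIV] by auto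
    then show ?thesis using False by (simp add: infsum_not_exists nsq_def)
  qed
  finally show ?thesis .
qed

lemma nsq_cinner: "nsq f = Re (cinner f f)"
  by (simp add: cinner_self)

lemma cinner_expand:
  assumes f: "is_ell2 f" and g: "is_ell2 g"
  shows "cinner (\<lambda>x. f x - t * g x) (\<lambda>x. f x - t * g x)
     = cinner f f - t * cinner f g - cnj t * cinner g f + t * cnj t * cinner g g"
proof -
  have tg: "is_ell2 (\<lambda>x. t * g x)" by (rule is_ell2_scale[OF g])
  have h: "is_ell2 (\<lambda>x. f x - t * g x)" by (rule is_ell2_diff[OF f tg])
  have "cinner (\<lambda>x. f x - t * g x) (\<lambda>x. f x - t * g x)
      = cinner f (\<lambda>x. f x - t * g x) - cinner (\<lambda>x. t * g x) (\<lambda>x. f x - t * g x)"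
    by (rule cinner_diff_left[OF h f tg])
  also have "\<dots> = (cinner f f - t * cinner f g) - cnj t * (cinner g f - t * cinner g g)"
    by (simp add: cinner_diff_right[OF f f tg] cinner_diff_right[OF g f tg]
          cinner_scale_left cinner_scale_right)
  finally show ?thesis by (simp add: algebra_simps)
qed

lemma nsq_zero_imp:
  assumes "is_ell2 g" "nsq g = 0" shows "g x = 0"
proof -
  have "(cmod (g x))\<^sup>2 = 0"
    using nonneg_infsum_le_0D[of "\<lambda>x. (cmod (g x))\<^sup>2" UNIV x] assms
    unfolding nsq_def is_ell2_def by auto
  then show ?thesis by simp
qed

lemma cinner_zero_right: "cinner f (\<lambda>x. 0) = 0"
  by (simp add: cinner_def)

lemma cauchy_schwarz_sq:
  assumes f: "is_ell2 f" and g: "is_ell2 g"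
  shows "(cmod (cinner f g))\<^sup>2 \<le> nsq f * nsq g"
proof (cases "nsq g = 0")
  case True
  then have "g = (\<lambda>x. 0)" using nsq_zero_imp[OF g] by auto
  then show ?thesis by (simp add: cinner_zero_right nsq_def)
next
  case False
  then have b: "nsq g > 0" using nsq_nonneg[of g] by auto
  define c where "c = cinner g f"
  define t where "t = c / of_real (nsq g)"
  have e: "cinner (\<lambda>x. f x - t * g x) (\<lambda>x. f x - t * g x)
     = cinner f f - t * cinner f g - cnj t * cinner g f + t * cnj t * cinner g g"
    by (rule cinner_expand[OF f g])
  have cfg: "cinner f g = cnj c" unfolding c_def using cinner_commute by metis
  have cgf: "cinner g f = c" unfolding c_def by simp
  have N: "complex_of_real (nsq g) \<noteq> 0" using b by simp
  have "complex_of_real (nsq (\<lambda>x. f x - t * g x))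
     = of_real (nsq f) - t * cnj c - cnj t * c + t * cnj t * of_real (nsq g)"
    using e by (simp add: cinner_self cfg cgf)
  also have "\<dots> = of_real (nsq f) - c * cnj c / of_real (nsq g)"
    using N unfolding t_def by (simp add: field_simps)
  also have "\<dots> = of_real (nsq f - (cmod c)\<^sup>2 / nsq g)"
    by (simp add: complex_norm_square[symmetric] del: of_real_power)
  finally have "nsq (\<lambda>x. f x - t * g x) = nsq f - (cmod c)\<^sup>2 / nsq g"
    using of_real_eq_iff by blast
  then have "0 \<le> nsq f - (cmod c)\<^sup>2 / nsq g" using nsq_nonneg by metis
  then have "(cmod c)\<^sup>2 \<le> nsq f * nsq g" using b by (simp add: field_simps)
  moreover have "cmod (cinner f g) = cmod c" by (simp add: cfg)
  ultimately show ?thesis by simp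
qed

lemma cauchy_schwarz:
  assumes f: "is_ell2 f" and g: "is_ell2 g"
  shows "cmod (cinner f g) \<le> ell2_norm f * ell2_norm g"
proof -
  have "(cmod (cinner f g))\<^sup>2 \<le> (ell2_norm f * ell2_norm g)\<^sup>2"
    using cauchy_schwarz_sq[OF assms] by (simp add: power_mult_distrib ell2_norm_sq)
  then show ?thesis
    using ell2_norm_nonneg[of f] ell2_norm_nonneg[of g] 
    by (meson mult_nonneg_nonneg power2_le_imp_le)
qed

lemma nsq_add:
  assumes f: "is_ell2 f" and g: "is_ell2 g"
  shows "nsq (\<lambda>x. f x + g x) = nsq f + nsq g + 2 * Re (cinner f g)"
proof -
  have "cinner (\<lambda>x. f x + g x) (\<lambda>x. f x + g x) = cinner f f + cinner f g + (cinner g f + cinner g g)"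
    by (simp add: cinner_add_left cinner_add_right is_ell2_add f g)
  moreover have "Re (cinner g f) = Re (cinner f g)"
    by (subst cinner_commute) simp
  ultimately show ?thesis by (simp add: nsq_cinner)
qed

lemma minkowski:
  assumes f: "is_ell2 f" and g: "is_ell2 g"
  shows "ell2_norm (\<lambda>x. f x + g x) \<le> ell2_norm f + ell2_norm g"
proof -
  have "Re (cinner f g) \<le> ell2_norm f * ell2_norm g"
    using cauchy_schwarz[OF f g] complex_Re_le_cmod order_trans by blast
  then have "(ell2_norm (\<lambda>x. f x + g x))\<^sup>2 \<le> (ell2_norm f + ell2_norm g)\<^sup>2"
    by (simp add: ell2_norm_sq nsq_add[OF f g] power2_sum)
  then show ?thesis
    using ell2_norm_nonneg by (meson add_nonneg_nonneg power2_le_imp_le)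
qed

lemma cinner_delta_left: "cinner (delta a) f = f a"
proof -
  have "cinner (delta a) f = (\<Sum>\<^sub>\<infinity>x\<in>{a}. cnj (delta a x) * f x)"
    unfolding cinner_def
    by (rule infsum_cong_neutral) (auto simp: delta_def)
  then show ?thesis by (simp add: delta_def)
qed

lemma cinner_delta_right: "cinner f (delta a) = cnj (f a)"
  by (subst cinner_commute) (simp add: cinner_delta_left)

lemma nsq_delta: "nsq (delta a) = 1"
  using cinner_self[of "delta a"] cinner_delta_left[of a "delta a"] by (simp add: delta_def)

lemma cinner_sum_right:
  assumes "is_ell2 f" "\<And>i. i \<in> I \<Longrightarrow> is_ell2 (F i)"
  shows "cinner f (\<lambda>x. \<Sum>i\<in>I. F i x) = (\<Sum>i\<in>I. cinner f (F i))"
proof -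
  have "cinner f (\<lambda>x. \<Sum>i\<in>I. F i x) = (\<Sum>\<^sub>\<infinity>x. \<Sum>i\<in>I. cnj (f x) * F i x)"
    unfolding cinner_def by (simp add: sum_distrib_left)
  also have "\<dots> = (\<Sum>i\<in>I. \<Sum>\<^sub>\<infinity>x. cnj (f x) * F i x)"
    by (rule infsum_sum_swap(1)) (use assms ell2_inner_summable in auto)
  finally show ?thesis by (simp add: cinner_def)
qed

lemma cinner_sum_left:
  assumes "is_ell2 f" "\<And>i. i \<in> I \<Longrightarrow> is_ell2 (F i)"
  shows "cinner (\<lambda>x. \<Sum>i\<in>I. F i x) f = (\<Sum>i\<in>I. cinner (F i) f)"
proof -
  have "cinner (\<lambda>x. \<Sum>i\<in>I. F i x) f = cnj (cinner f (\<lambda>x. \<Sum>i\<in>I. F i x))"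
    by (rule cinner_commute)
  also have "\<dots> = (\<Sum>i\<in>I. cnj (cinner f (F i)))" using cinner_sum_right[of f I F] assms by simp
  also have "\<dots> = (\<Sum>i\<in>I. cinner (F i) f)" by (simp add: cinner_commute[of "F _" f])
  finally show ?thesis .
qed

lemma bessel:
  assumes on: "orthonormal_fam n e" and g: "is_ell2 g"
  shows "(\<Sum>i<n. (cmod (cinner (e i) g))\<^sup>2) \<le> nsq g"
proof -
  define c where "c i = cinner (e i) g" for i
  have ei: "is_ell2 (e i)" if "i < n" for i using on that by (simp add: orthonormal_fam_def)
  have eij: "cinner (e i) (e j) = (if i = j then 1 else 0)" if "i < n" "j < n" for i j
    using on that by (simp add: orthonormal_fam_def)
  define s where "s = (\<lambda>x. \<Sum>i<n. c i * e i x)"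
  have s2: "is_ell2 s" unfolding s_def by (rule is_ell2_sum) (use ei is_ell2_scale in auto)
  define h where "h = (\<lambda>x. g x - s x)"
  have h2: "is_ell2 h" unfolding h_def by (rule is_ell2_diff[OF g s2])
  have ej_s: "cinner (e j) s = c j" if "j < n" for j
  proof -
    have "cinner (e j) s = (\<Sum>i<n. cinner (e j) (\<lambda>x. c i * e i x))"
      unfolding s_def by (rule cinner_sum_right) (use ei that is_ell2_scale in auto)
    also have "\<dots> = (\<Sum>i<n. c i * (if j = i then 1 else 0))"
      by (rule sum.cong) (auto simp: cinner_scale_right eij that)
    also have "\<dots> = c j" using that by (simp add: if_distrib sum.If_cases)
    finally show ?thesis .
  qed
  have ej_h: "cinner (e j) h = 0" if "j < n" for j
    unfolding h_def using cinner_diff_right[OF ei[OF that] g s2] ej_s[OF that]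
    by (simp add: c_def)
  have s_h: "cinner s h = 0"
  proof -
    have "cinner s h = (\<Sum>i<n. cinner (\<lambda>x. c i * e i x) h)"
      unfolding s_def by (rule cinner_sum_left) (use ei h2 is_ell2_scale in auto)
    also have "\<dots> = 0" by (simp add: cinner_scale_left ej_h)
    finally show ?thesis .
  qed
  have "cinner h h = cinner g h" 
    using cinner_diff_left[OF h2 g s2] s_h by (simp add: h_def)
  also have "\<dots> = cinner g g - cinner g s"
    unfolding h_def by (rule cinner_diff_right[OF g g s2])
  also have "cinner g s = (\<Sum>i<n. cinner g (\<lambda>x. c i * e i x))"
    unfolding s_def by (rule cinner_sum_right) (use ei g is_ell2_scale in auto)
  also have "\<dots> = (\<Sum>i<n. c i * cnj (c i))"
    by (rule sum.cong) (auto simp: cinner_scale_right c_def intro: cinner_commute)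
  finally have 1: "complex_of_real (nsq h) = complex_of_real (nsq g) - (\<Sum>i<n. c i * cnj (c i))"
    by (simp add: cinner_self)
  have 2: "(\<Sum>i<n. c i * cnj (c i)) = complex_of_real (\<Sum>i<n. (cmod (c i))\<^sup>2)"
    by (simp add: complex_norm_square del: of_real_power)
  have "nsq h = nsq g - (\<Sum>i<n. (cmod (c i))\<^sup>2)"
    using 1 unfolding 2 by (metis of_real_diff of_real_eq_iff)
  then show ?thesis using nsq_nonneg[of h] by (simp add: c_def)
qed


definition rowl2 :: "('a \<Rightarrow> 'b \<Rightarrow> complex) \<Rightarrow> bool" where
  "rowl2 M \<longleftrightarrow> (\<forall>x. is_ell2 (\<lambda>y. M x y))"

lemma bounded_mat_rowl2: "bounded_mat M \<Longrightarrow> rowl2 M"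
  by (simp add: bounded_mat_def rowl2_def)

lemma bounded_mat_apply: "bounded_mat M \<Longrightarrow> is_ell2 f \<Longrightarrow> is_ell2 (mat_apply M f)"
  unfolding bounded_mat_def by blast

lemma row_summable: "rowl2 M \<Longrightarrow> is_ell2 f \<Longrightarrow> (\<lambda>y. M x y * f y) summable_on UNIV"
  unfolding rowl2_def by (rule ell2_mult_summable) auto

lemma mat_apply_add:
  assumes "rowl2 M" "is_ell2 f" "is_ell2 g"
  shows "mat_apply M (\<lambda>y. f y + g y) = (\<lambda>x. mat_apply M f x + mat_apply M g x)"
  unfolding mat_apply_def
  using infsum_add[OF row_summable[OF assms(1,2)] row_summable[OF assms(1,3)]]
  by (simp add: distrib_left)

lemma mat_apply_scale: "mat_apply M (\<lambda>y. c * f y) = (\<lambda>x. c * mat_apply M f x)"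
proof
  fix x
  have "(\<Sum>\<^sub>\<infinity>y. M x y * (c * f y)) = (\<Sum>\<^sub>\<infinity>y. c * (M x y * f y))"
    by (simp add: algebra_simps)
  also have "\<dots> = c * (\<Sum>\<^sub>\<infinity>y. M x y * f y)" by (rule infsum_cmult_right')
  finally show "mat_apply M (\<lambda>y. c * f y) x = c * mat_apply M f x" by (simp add: mat_apply_def)
qed

lemma mat_apply_diff:
  assumes "rowl2 M" "is_ell2 f" "is_ell2 g"
  shows "mat_apply M (\<lambda>y. f y - g y) = (\<lambda>x. mat_apply M f x - mat_apply M g x)"
proof -
  have "mat_apply M (\<lambda>y. f y + (-1) * g y) = (\<lambda>x. mat_apply M f x + mat_apply M (\<lambda>y. (-1) * g y) x)"
    by (rule mat_apply_add[OF assms(1,2) is_ell2_scale[OF assms(3)]])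
  also have "mat_apply M (\<lambda>y. (-1) * g y) = (\<lambda>x. (-1) * mat_apply M g x)" by (rule mat_apply_scale)
  finally show ?thesis by simp
qed

lemma mat_apply_add_mat:
  assumes "rowl2 M" "rowl2 N" "is_ell2 f"
  shows "mat_apply (\<lambda>x y. M x y + N x y) f = (\<lambda>x. mat_apply M f x + mat_apply N f x)"
  unfolding mat_apply_def
  using infsum_add[OF row_summable[OF assms(1,3)] row_summable[OF assms(2,3)]]
  by (simp add: distrib_right)

lemma mat_apply_scale_mat: "mat_apply (\<lambda>x y. c * M x y) f = (\<lambda>x. c * mat_apply M f x)"
proof
  fix x
  have "(\<Sum>\<^sub>\<infinity>y. c * M x y * f y) = (\<Sum>\<^sub>\<infinity>y. c * (M x y * f y))"
    by (simp add: algebra_simps)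
  also have "\<dots> = c * (\<Sum>\<^sub>\<infinity>y. M x y * f y)" by (rule infsum_cmult_right')
  finally show "mat_apply (\<lambda>x y. c * M x y) f x = c * mat_apply M f x" by (simp add: mat_apply_def)
qed

lemma mat_apply_delta: "mat_apply M (delta z) = (\<lambda>x. M x z)"
proof
  fix x
  have "mat_apply M (delta z) x = (\<Sum>\<^sub>\<infinity>y\<in>{z}. M x y * delta z y)"
    unfolding mat_apply_def by (rule infsum_cong_neutral) (auto simp: delta_def)
  then show "mat_apply M (delta z) x = M x z" by (simp add: delta_def)
qed

lemma rowl2_add: "rowl2 M \<Longrightarrow> rowl2 N \<Longrightarrow> rowl2 (\<lambda>x y. M x y + N x y)"
  unfolding rowl2_def by (simp add: is_ell2_add)

lemma rowl2_scale: "rowl2 M \<Longrightarrow> rowl2 (\<lambda>x y. c * M x y)"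
  unfolding rowl2_def by (simp add: is_ell2_scale)

lemma rowl2_lincomb: "rowl2 M \<Longrightarrow> rowl2 N \<Longrightarrow> rowl2 (\<lambda>x y. M x y + c * N x y)"
  by (simp add: rowl2_add rowl2_scale)

lemma rowl2_zero: "rowl2 (\<lambda>x y. 0)"
  by (simp add: rowl2_def is_ell2_zero)

lemma rowl2_sum:
  assumes "\<And>k. k \<in> K \<Longrightarrow> rowl2 (M k)"
  shows "rowl2 (\<lambda>x y. \<Sum>k\<in>K. M k x y)"
  using assms unfolding rowl2_def by (auto intro!: is_ell2_sum)

lemma ell2_norm_scale: "ell2_norm (\<lambda>x. c * f x) = cmod c * ell2_norm f"
proof -
  have "nsq (\<lambda>x. c * f x) = (cmod c)\<^sup>2 * nsq f"
    unfolding nsq_def by (simp add: norm_mult power_mult_distrib infsum_cmult_right')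
  then show ?thesis by (simp add: ell2_norm_nsq real_sqrt_mult)
qed

lemma bounded_mat_lincomb:
  assumes M: "bounded_mat M" and N: "bounded_mat N"
  shows "bounded_mat (\<lambda>x y. M x y + c * N x y)"
proof -
  obtain C1 where C1: "\<And>f. is_ell2 f \<Longrightarrow> is_ell2 (mat_apply M f) \<and> ell2_norm (mat_apply M f) \<le> C1 * ell2_norm f"
    using M unfolding bounded_mat_def by blast
  obtain C2 where C2: "\<And>f. is_ell2 f \<Longrightarrow> is_ell2 (mat_apply N f) \<and> ell2_norm (mat_apply N f) \<le> C2 * ell2_norm f"
    using N unfolding bounded_mat_def by blast
  have rM: "rowl2 M" and rN: "rowl2 N" using M N by (auto intro: bounded_mat_rowl2)
  have rcN: "rowl2 (\<lambda>x y. c * N x y)" by (rule rowl2_scale[OF rN])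
  have ap: "mat_apply (\<lambda>x y. M x y + c * N x y) f = (\<lambda>x. mat_apply M f x + c * mat_apply N f x)"
    if "is_ell2 f" for f
    using mat_apply_add_mat[OF rM rcN that] by (simp add: mat_apply_scale_mat)
  show ?thesis unfolding bounded_mat_def
  proof (intro conjI exI allI impI)
    show "is_ell2 (\<lambda>y. M x y + c * N x y)" for x using rowl2_lincomb[OF rM rN] by (simp add: rowl2_def)
  next
    fix f :: "'a \<Rightarrow> complex" assume f: "is_ell2 f"
    have a: "is_ell2 (mat_apply M f)" "is_ell2 (\<lambda>x. c * mat_apply N f x)"
      using C1[OF f] C2[OF f] is_ell2_scale by auto
    show "is_ell2 (mat_apply (\<lambda>x y. M x y + c * N x y) f)"
      unfolding ap[OF f] by (rule is_ell2_add[OF a])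
    have "ell2_norm (mat_apply (\<lambda>x y. M x y + c * N x y) f)
        \<le> ell2_norm (mat_apply M f) + ell2_norm (\<lambda>x. c * mat_apply N f x)"
      unfolding ap[OF f] by (rule minkowski[OF a])
    also have "\<dots> \<le> C1 * ell2_norm f + cmod c * (C2 * ell2_norm f)"
      unfolding ell2_norm_scale using C1[OF f] C2[OF f]
      by (intro add_mono mult_left_mono) auto
    finally show "ell2_norm (mat_apply (\<lambda>x y. M x y + c * N x y) f) \<le> (C1 + cmod c * C2) * ell2_norm f"
      by (simp add: algebra_simps)
  qed
qed

definition tsum :: "('a \<Rightarrow> 'a \<Rightarrow> complex) \<Rightarrow> nat \<Rightarrow> (nat \<Rightarrow> 'a \<Rightarrow> complex) \<Rightarrow> (nat \<Rightarrow> 'a \<Rightarrow> complex) \<Rightarrow> real" where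
  "tsum M n e f = (\<Sum>i<n. cmod (cinner (f i) (mat_apply M (e i))))"

lemma tns_iff: "s \<in> trace_norm_set M \<longleftrightarrow> (\<exists>n e f. s = tsum M n e f \<and> orthonormal_fam n e \<and> orthonormal_fam n f)"
  unfolding trace_norm_set_def tsum_def by blast

lemma tns_zero: "0 \<in> trace_norm_set M"
  unfolding tns_iff tsum_def orthonormal_fam_def by (rule exI[of _ 0]) auto

lemma tns_nonempty: "trace_norm_set M \<noteq> {}"
  using tns_zero by blast

lemma tns_elem_nonneg: "s \<in> trace_norm_set M \<Longrightarrow> s \<ge> 0"
  unfolding tns_iff tsum_def by (auto intro: sum_nonneg)

lemma trace_norm_nonneg: "bdd_above (trace_norm_set M) \<Longrightarrow> trace_norm M \<ge> 0"
  unfolding trace_norm_def using tns_zero by (meson cSup_upper)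

lemma trace_norm_upper: "bdd_above (trace_norm_set M) \<Longrightarrow> s \<in> trace_norm_set M \<Longrightarrow> s \<le> trace_norm M"
  unfolding trace_norm_def by (rule cSup_upper)

lemma trace_norm_least: "(\<And>s. s \<in> trace_norm_set M \<Longrightarrow> s \<le> B) \<Longrightarrow> trace_norm M \<le> B"
  unfolding trace_norm_def by (rule cSup_least[OF tns_nonempty])

lemma tsum_lincomb:
  assumes M: "bounded_mat M" and N: "bounded_mat N" and on: "orthonormal_fam n e" "orthonormal_fam n f"
  shows "tsum (\<lambda>x y. M x y + c * N x y) n e f \<le> tsum M n e f + cmod c * tsum N n e f"
proof -
  have rM: "rowl2 M" and rN: "rowl2 N" using M N by (auto intro: bounded_mat_rowl2)
  have e: "is_ell2 (e i)" and f: "is_ell2 (f i)" if "i < n" for i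
    using on that by (auto simp: orthonormal_fam_def)
  have "tsum (\<lambda>x y. M x y + c * N x y) n e f
     = (\<Sum>i<n. cmod (cinner (f i) (\<lambda>x. mat_apply M (e i) x + c * mat_apply N (e i) x)))"
    unfolding tsum_def
    by (rule sum.cong) (auto simp: mat_apply_add_mat[OF rM rowl2_scale[OF rN] e] mat_apply_scale_mat)
  also have "\<dots> \<le> (\<Sum>i<n. cmod (cinner (f i) (mat_apply M (e i))) + cmod c * cmod (cinner (f i) (mat_apply N (e i))))"
  proof (rule sum_mono)
    fix i assume "i \<in> {..<n}"
    then have i: "i < n" by simp
    have a: "is_ell2 (mat_apply M (e i))" "is_ell2 (\<lambda>x. c * mat_apply N (e i) x)"
      using bounded_mat_apply[OF M e[OF i]] bounded_mat_apply[OF N e[OF i]] is_ell2_scale by auto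
    have "cinner (f i) (\<lambda>x. mat_apply M (e i) x + c * mat_apply N (e i) x)
       = cinner (f i) (mat_apply M (e i)) + c * cinner (f i) (mat_apply N (e i))"
      using cinner_add_right[OF f[OF i] a] by (simp add: cinner_scale_right)
    then show "cmod (cinner (f i) (\<lambda>x. mat_apply M (e i) x + c * mat_apply N (e i) x))
        \<le> cmod (cinner (f i) (mat_apply M (e i))) + cmod c * cmod (cinner (f i) (mat_apply N (e i)))"
      by (metis norm_mult norm_triangle_ineq)
  qed
  finally show ?thesis by (simp add: tsum_def sum.distrib sum_distrib_left)
qed

lemma orthonormal_single:
  assumes "is_ell2 v" "nsq v = 1"
  shows "orthonormal_fam (Suc 0) (\<lambda>_. v)"
  using assms by (simp add: orthonormal_fam_def cinner_self)

lemma cinner_finite_support: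
  assumes "finite F" "\<And>x. x \<notin> F \<Longrightarrow> f x = 0"
  shows "cinner f g = (\<Sum>x\<in>F. cnj (f x) * g x)"
proof -
  have "cinner f g = (\<Sum>\<^sub>\<infinity>x\<in>F. cnj (f x) * g x)"
    unfolding cinner_def by (rule infsum_cong_neutral) (use assms in auto)
  then show ?thesis using assms by simp
qed

lemma bdd_bounded_aux:
  assumes r: "rowl2 M" and bdd: "bdd_above (trace_norm_set M)" and e: "is_ell2 e" and ne: "nsq e = 1"
    and F: "finite F"
  shows "(\<Sum>x\<in>F. (cmod (mat_apply M e x))\<^sup>2) \<le> (trace_norm M)\<^sup>2"
proof -
  define S where "S = (\<Sum>x\<in>F. (cmod (mat_apply M e x))\<^sup>2)"
  have S0: "S \<ge> 0" unfolding S_def by (rule sum_nonneg) simp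
  show ?thesis
  proof (cases "S = 0")
    case True
    then show ?thesis using S0 by (simp add: S_def)
  next
    case False
    then have Sp: "S > 0" using S0 by simp
    define w where "w x = (if x \<in> F then mat_apply M e x / of_real (sqrt S) else 0)" for x
    have wF: "finite {x. w x \<noteq> 0}" by (rule finite_subset[OF _ F]) (auto simp: w_def)
    have w2: "is_ell2 w" by (rule is_ell2_finite_support[OF wF])
    have sumS: "(\<Sum>x\<in>F. complex_of_real ((cmod (mat_apply M e x))\<^sup>2)) = of_real S"
      by (simp add: S_def)
    have sq: "complex_of_real (sqrt S) * complex_of_real (sqrt S) = complex_of_real S"
    proof -
      have "sqrt S * sqrt S = S" using Sp by simp
      then show ?thesis by (metis of_real_mult)
    qed
    have cn: "cnj z * z = complex_of_real ((cmod z)\<^sup>2)" for z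
      by (simp only: complex_norm_square mult.commute)
    have "cinner w w = (\<Sum>x\<in>F. cnj (w x) * w x)"
      by (rule cinner_finite_support[OF F]) (simp add: w_def)
    also have "\<dots> = (\<Sum>x\<in>F. of_real ((cmod (mat_apply M e x))\<^sup>2) / of_real S)"
    proof (intro sum.cong refl)
      fix x assume "x \<in> F"
      then have "cnj (w x) * w x = cnj (mat_apply M e x) * mat_apply M e x / (complex_of_real (sqrt S) * complex_of_real (sqrt S))"
        by (simp add: w_def)
      then show "cnj (w x) * w x = of_real ((cmod (mat_apply M e x))\<^sup>2) / of_real S"
        by (simp only: sq cn)
    qed
    also have "\<dots> = 1" 
      by (simp only: sum_divide_distrib[symmetric] sumS) (use Sp in simp)
    finally have nw: "nsq w = 1" by (simp add: cinner_self)
    have "cinner w (mat_apply M e) = (\<Sum>x\<in>F. cnj (w x) * mat_apply M e x)"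
      by (rule cinner_finite_support[OF F]) (simp add: w_def)
    also have "\<dots> = (\<Sum>x\<in>F. of_real ((cmod (mat_apply M e x))\<^sup>2) / of_real (sqrt S))"
    proof (intro sum.cong refl)
      fix x assume "x \<in> F"
      then have "cnj (w x) * mat_apply M e x = cnj (mat_apply M e x) * mat_apply M e x / complex_of_real (sqrt S)"
        by (simp add: w_def)
      then show "cnj (w x) * mat_apply M e x = of_real ((cmod (mat_apply M e x))\<^sup>2) / of_real (sqrt S)"
        by (simp only: cn)
    qed
    also have "\<dots> = of_real (sqrt S)"
      by (simp only: sum_divide_distrib[symmetric] sumS) (use Sp in \<open>simp add: real_div_sqrt flip: of_real_divide\<close>)
    finally have cw: "cinner w (mat_apply M e) = of_real (sqrt S)" .
    have "tsum M (Suc 0) (\<lambda>_. e) (\<lambda>_. w) \<in> trace_norm_set M"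
      unfolding tns_iff using orthonormal_single[OF e ne] orthonormal_single[OF w2 nw] by blast
    then have "tsum M (Suc 0) (\<lambda>_. e) (\<lambda>_. w) \<le> trace_norm M" by (rule trace_norm_upper[OF bdd])
    then have "sqrt S \<le> trace_norm M" by (simp add: tsum_def cw)
    then have "(sqrt S)\<^sup>2 \<le> (trace_norm M)\<^sup>2" using Sp by (intro power_mono) auto
    then show ?thesis using S0 by (simp add: S_def)
  qed
qed

lemma nsq_scale: "nsq (\<lambda>x. c * f x) = (cmod c)\<^sup>2 * nsq f"
  unfolding nsq_def by (simp add: norm_mult power_mult_distrib infsum_cmult_right')

lemma bdd_apply:
  assumes r: "rowl2 M" and bdd: "bdd_above (trace_norm_set M)" and e: "is_ell2 e"
  shows "is_ell2 (mat_apply M e)" and "ell2_norm (mat_apply M e) \<le> trace_norm M * ell2_norm e"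
proof -
  have "is_ell2 (mat_apply M e) \<and> nsq (mat_apply M e) \<le> (trace_norm M)\<^sup>2 * nsq e"
  proof (cases "nsq e = 0")
    case True
    then have "e = (\<lambda>x. 0)" using nsq_zero_imp[OF e] by auto
    then have "mat_apply M e = (\<lambda>x. 0)" by (simp add: mat_apply_def)
    then show ?thesis by (simp add: is_ell2_zero nsq_def infsum_nonneg)
  next
    case False
    then have p: "nsq e > 0" using nsq_nonneg[of e] by simp
    define c where "c = complex_of_real (1 / sqrt (nsq e))"
    have e': "is_ell2 (\<lambda>x. c * e x)" by (rule is_ell2_scale[OF e])
    have ne': "nsq (\<lambda>x. c * e x) = 1" 
      by (simp only: nsq_scale) (use p in \<open>simp add: c_def power_divide norm_divide\<close>)
    have fin: "(\<Sum>x\<in>F. (cmod (mat_apply M e x))\<^sup>2) \<le> (trace_norm M)\<^sup>2 * nsq e" if F: "finite F" for F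
    proof -
      have "(\<Sum>x\<in>F. (cmod (mat_apply M (\<lambda>x. c * e x) x))\<^sup>2) \<le> (trace_norm M)\<^sup>2"
        by (rule bdd_bounded_aux[OF r bdd e' ne' F])
      moreover have "(\<Sum>x\<in>F. (cmod (mat_apply M (\<lambda>x. c * e x) x))\<^sup>2)
          = (cmod c)\<^sup>2 * (\<Sum>x\<in>F. (cmod (mat_apply M e x))\<^sup>2)"
        by (simp only: mat_apply_scale norm_mult power_mult_distrib sum_distrib_left)
      moreover have "(cmod c)\<^sup>2 = 1 / nsq e" using p by (simp add: c_def power_divide norm_divide)
      ultimately have "(\<Sum>x\<in>F. (cmod (mat_apply M e x))\<^sup>2) / nsq e \<le> (trace_norm M)\<^sup>2"
        by simp
      then show ?thesis using p by (simp add: field_simps)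
    qed
    have s: "is_ell2 (mat_apply M e)" unfolding is_ell2_def
      by (rule nonneg_bdd_above_summable_on) (use fin in \<open>auto intro!: bdd_aboveI2\<close>)
    have "nsq (mat_apply M e) \<le> (trace_norm M)\<^sup>2 * nsq e"
      unfolding nsq_def[of "mat_apply M e"]
      by (rule infsum_le_finite_sums) (use s fin in \<open>auto simp: is_ell2_def\<close>)
    then show ?thesis using s by simp
  qed
  then have A: "is_ell2 (mat_apply M e)" and B: "nsq (mat_apply M e) \<le> (trace_norm M)\<^sup>2 * nsq e"
    by auto
  show "is_ell2 (mat_apply M e)" by (rule A)
  have T: "trace_norm M \<ge> 0" by (rule trace_norm_nonneg[OF bdd])
  have "sqrt (nsq (mat_apply M e)) \<le> sqrt ((trace_norm M)\<^sup>2 * nsq e)"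
    using B by (rule real_sqrt_le_mono)
  also have "\<dots> = trace_norm M * sqrt (nsq e)" using T by (simp add: real_sqrt_mult)
  finally show "ell2_norm (mat_apply M e) \<le> trace_norm M * ell2_norm e"
    by (simp add: ell2_norm_nsq)
qed

lemma bdd_imp_bounded_mat:
  assumes r: "rowl2 M" and bdd: "bdd_above (trace_norm_set M)"
  shows "bounded_mat M"
  unfolding bounded_mat_def
  using r bdd_apply[OF r bdd] by (auto simp: rowl2_def)


definition tcl :: "('a \<Rightarrow> 'a \<Rightarrow> complex) \<Rightarrow> bool" where
  "tcl M \<longleftrightarrow> rowl2 M \<and> bdd_above (trace_norm_set M)"

lemma tcl_trace_class: "tcl M \<Longrightarrow> trace_class M"
  unfolding tcl_def trace_class_def by (simp add: bdd_imp_bounded_mat)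

lemma trace_class_tcl: "trace_class M \<Longrightarrow> tcl M"
  unfolding tcl_def trace_class_def by (simp add: bounded_mat_rowl2)

lemma tcl_bounded: "tcl M \<Longrightarrow> bounded_mat M"
  unfolding tcl_def by (simp add: bdd_imp_bounded_mat)

lemma tcl_lincomb:
  assumes M: "tcl M" and N: "tcl N"
  shows "tcl (\<lambda>x y. M x y + c * N x y)"
    and "trace_norm (\<lambda>x y. M x y + c * N x y) \<le> trace_norm M + cmod c * trace_norm N"
proof -
  have b: "s \<le> trace_norm M + cmod c * trace_norm N" if s_in: "s \<in> trace_norm_set (\<lambda>x y. M x y + c * N x y)" for s
  proof -
    obtain n e f where s: "s = tsum (\<lambda>x y. M x y + c * N x y) n e f" and on: "orthonormal_fam n e" "orthonormal_fam n f"
      using s_in unfolding tns_iff by blast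
    have "s \<le> tsum M n e f + cmod c * tsum N n e f"
      unfolding s by (rule tsum_lincomb[OF tcl_bounded[OF M] tcl_bounded[OF N] on])
    also have "\<dots> \<le> trace_norm M + cmod c * trace_norm N"
      using M N on unfolding tcl_def
      by (intro add_mono mult_left_mono trace_norm_upper) (auto simp: tns_iff)
    finally show ?thesis .
  qed
  show "tcl (\<lambda>x y. M x y + c * N x y)"
    unfolding tcl_def
  proof (intro conjI)
    show "rowl2 (\<lambda>x y. M x y + c * N x y)" using M N by (simp add: tcl_def rowl2_lincomb)
    show "bdd_above (trace_norm_set (\<lambda>x y. M x y + c * N x y))"
      by (rule bdd_aboveI) (rule b)
  qed
  show "trace_norm (\<lambda>x y. M x y + c * N x y) \<le> trace_norm M + cmod c * trace_norm N"
    by (rule trace_norm_least) (rule b)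
qed

lemma tns_zero_mat: "trace_norm_set (\<lambda>(x::'a) (y::'a). 0 :: complex) = {0}"
proof -
  have "mat_apply (\<lambda>x y. 0 :: complex) e = (\<lambda>x. 0)" for e :: "'a \<Rightarrow> complex"
    by (simp add: mat_apply_def)
  then have "tsum (\<lambda>(x::'a) (y::'a). 0 :: complex) n e f = 0" for n and e f :: "nat \<Rightarrow> 'a \<Rightarrow> complex"
    by (simp add: tsum_def cinner_zero_right)
  then have "s = 0" if "s \<in> trace_norm_set (\<lambda>(x::'a) (y::'a). 0 :: complex)" for s :: real
    using that unfolding tns_iff by auto
  then show ?thesis using tns_zero by blast
qed

lemma tcl_zero: "tcl (\<lambda>x y. 0)" and trace_norm_zero: "trace_norm (\<lambda>x y. 0) = 0"
  by (auto simp: tcl_def tns_zero_mat rowl2_zero trace_norm_def)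

lemma tcl_scale:
  fixes M :: "'a \<Rightarrow> 'a \<Rightarrow> complex"
  assumes M: "tcl M"
  shows "tcl (\<lambda>x y. c * M x y)" and "trace_norm (\<lambda>x y. c * M x y) \<le> cmod c * trace_norm M"
proof -
  have e: "(\<lambda>(x::'a) (y::'a). (0::complex) + c * M x y) = (\<lambda>x y. c * M x y)" by simp
  show "tcl (\<lambda>x y. c * M x y)" using tcl_lincomb(1)[OF tcl_zero M, of c] unfolding e .
  have "trace_norm (\<lambda>x y. c * M x y) \<le> trace_norm (\<lambda>(x::'a) (y::'a). 0::complex) + cmod c * trace_norm M"
    using tcl_lincomb(2)[OF tcl_zero M, of c] unfolding e .
  then show "trace_norm (\<lambda>x y. c * M x y) \<le> cmod c * trace_norm M"
    unfolding trace_norm_zero by simp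
qed

lemma trace_norm_scale:
  assumes M: "tcl M"
  shows "trace_norm (\<lambda>x y. c * M x y) = cmod c * trace_norm M"
proof (cases "c = 0")
  case True then show ?thesis using trace_norm_zero by simp
next
  case False
  have "trace_norm M = trace_norm (\<lambda>x y. (1/c) * (c * M x y))" using False by simp
  also have "\<dots> \<le> cmod (1/c) * trace_norm (\<lambda>x y. c * M x y)"
    by (rule tcl_scale(2)[OF tcl_scale(1)[OF M]])
  finally have "cmod c * trace_norm M \<le> trace_norm (\<lambda>x y. c * M x y)"
    using False by (simp add: norm_divide field_simps)
  then show ?thesis using tcl_scale(2)[OF M, of c] by simp
qed

lemma tcl_diff:
  assumes M: "tcl M" and N: "tcl N"
  shows "tcl (\<lambda>x y. M x y - N x y)"
    and "trace_norm (\<lambda>x y. M x y - N x y) \<le> trace_norm M + trace_norm N"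
  using tcl_lincomb[OF M N, of "-1"] by auto

lemma unbdd_lincomb:
  assumes M: "rowl2 M" and ub: "\<not> bdd_above (trace_norm_set M)" and N: "tcl N" and c: "c \<noteq> 0"
  shows "\<not> bdd_above (trace_norm_set (\<lambda>x y. N x y + c * M x y))"
proof
  assume b: "bdd_above (trace_norm_set (\<lambda>x y. N x y + c * M x y))"
  have r: "rowl2 (\<lambda>x y. N x y + c * M x y)" using N M by (simp add: tcl_def rowl2_lincomb)
  have t: "tcl (\<lambda>x y. N x y + c * M x y)" using b r by (simp add: tcl_def)
  have "tcl (\<lambda>x y. (1/c) * (N x y + c * M x y) + (- 1/c) * N x y)"
    by (rule tcl_lincomb(1)[OF tcl_scale(1)[OF t] N])
  moreover have "(\<lambda>x y. (1/c) * (N x y + c * M x y) + (- 1/c) * N x y) = M"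
  proof -
    have "(1/c) * (a + c * b) + (- 1/c) * a = b" for a b using c by (simp add: field_simps)
    then show ?thesis by (intro ext) 
  qed
  ultimately show False using ub by (simp add: tcl_def)
qed

definition c0 :: real where "c0 = (LEAST z::real. False)"

lemma Sup_unbdd: "\<not> bdd_above (X :: real set) \<Longrightarrow> Sup X = c0"
proof -
  assume "\<not> bdd_above X"
  then have "(\<lambda>z. \<forall>x\<in>X. x \<le> z) = (\<lambda>z. False)"
  proof (intro ext)
    fix z assume "\<not> bdd_above X"
    then show "(\<forall>x\<in>X. x \<le> z) = False" unfolding bdd_above_def by auto
  qed
  then have "Least (\<lambda>z. \<forall>x\<in>X. x \<le> z) = Least (\<lambda>z::real. False)"
    by (rule arg_cong[where f=Least])
  then show ?thesis unfolding Sup_real_def c0_def .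
qed

lemma trace_norm_unbdd: "\<not> bdd_above (trace_norm_set M) \<Longrightarrow> trace_norm M = c0"
  unfolding trace_norm_def by (rule Sup_unbdd)

lemma col_bound:
  assumes "tcl M" shows "is_ell2 (\<lambda>x. M x z)" and "ell2_norm (\<lambda>x. M x z) \<le> trace_norm M"
proof -
  have r: "rowl2 M" and b: "bdd_above (trace_norm_set M)" using assms by (auto simp: tcl_def)
  have "is_ell2 (mat_apply M (delta z))" by (rule bdd_apply(1)[OF r b is_ell2_delta])
  then show "is_ell2 (\<lambda>x. M x z)" by (simp add: mat_apply_delta)
  have "ell2_norm (mat_apply M (delta z)) \<le> trace_norm M * ell2_norm (delta z)"
    by (rule bdd_apply(2)[OF r b is_ell2_delta])
  then show "ell2_norm (\<lambda>x. M x z) \<le> trace_norm M" by (simp add: mat_apply_delta ell2_norm_nsq nsq_delta)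
qed


definition pos :: "('a \<Rightarrow> 'a \<Rightarrow> complex) \<Rightarrow> bool" where
  "pos M \<longleftrightarrow> (\<forall>f. is_ell2 f \<longrightarrow> Im (cinner f (mat_apply M f)) = 0 \<and> Re (cinner f (mat_apply M f)) \<ge> 0)"

lemma density_pos: "density_op D \<Longrightarrow> pos D"
  unfolding density_op_def pos_def by blast

lemma density_bounded: "density_op D \<Longrightarrow> bounded_mat D"
  unfolding density_op_def trace_class_def by blast

lemma density_tcl: "density_op D \<Longrightarrow> tcl D"
  unfolding density_op_def by (simp add: trace_class_tcl)

lemma pos_expand:
  assumes M: "bounded_mat M" and f: "is_ell2 f" and g: "is_ell2 g"
  shows "cinner (\<lambda>x. f x + c * g x) (mat_apply M (\<lambda>x. f x + c * g x))
     = cinner f (mat_apply M f) + c * cinner f (mat_apply M g) + cnj c * cinner g (mat_apply M f)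
       + cnj c * c * cinner g (mat_apply M g)"
proof -
  have r: "rowl2 M" by (rule bounded_mat_rowl2[OF M])
  have cg: "is_ell2 (\<lambda>x. c * g x)" by (rule is_ell2_scale[OF g])
  have Mf: "is_ell2 (mat_apply M f)" and Mg: "is_ell2 (mat_apply M g)"
    using bounded_mat_apply[OF M] f g by auto
  have cMg: "is_ell2 (\<lambda>x. c * mat_apply M g x)" by (rule is_ell2_scale[OF Mg])
  have ap: "mat_apply M (\<lambda>x. f x + c * g x) = (\<lambda>x. mat_apply M f x + c * mat_apply M g x)"
    using mat_apply_add[OF r f cg] by (simp add: mat_apply_scale)
  have s: "is_ell2 (\<lambda>x. mat_apply M f x + c * mat_apply M g x)" by (rule is_ell2_add[OF Mf cMg])
  have "cinner (\<lambda>x. f x + c * g x) (\<lambda>x. mat_apply M f x + c * mat_apply M g x)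
      = cinner f (\<lambda>x. mat_apply M f x + c * mat_apply M g x) + cinner (\<lambda>x. c * g x) (\<lambda>x. mat_apply M f x + c * mat_apply M g x)"
    by (rule cinner_add_left[OF s f cg])
  also have "\<dots> = (cinner f (mat_apply M f) + c * cinner f (mat_apply M g))
       + cnj c * (cinner g (mat_apply M f) + c * cinner g (mat_apply M g))"
    by (simp add: cinner_add_right[OF f Mf cMg] cinner_add_right[OF g Mf cMg] cinner_scale_left cinner_scale_right)
  finally show ?thesis unfolding ap by (simp add: algebra_simps)
qed

lemma pos_real:
  assumes "pos M" "is_ell2 f"
  shows "cinner f (mat_apply M f) = of_real (Re (cinner f (mat_apply M f)))"
  using assms unfolding pos_def by (simp add: complex_eq_iff)

lemma pos_hermitian:
  assumes M: "bounded_mat M" and p: "pos M" and f: "is_ell2 f" and g: "is_ell2 g"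
  shows "cinner f (mat_apply M g) = cnj (cinner g (mat_apply M f))"
proof -
  define a where "a = cinner f (mat_apply M g)"
  define b where "b = cinner g (mat_apply M f)"
  have i1: "Im (cinner (\<lambda>x. f x + 1 * g x) (mat_apply M (\<lambda>x. f x + 1 * g x))) = 0"
    using p is_ell2_add[OF f is_ell2_scale[OF g]] unfolding pos_def by blast
  have i2: "Im (cinner (\<lambda>x. f x + \<i> * g x) (mat_apply M (\<lambda>x. f x + \<i> * g x))) = 0"
    using p is_ell2_add[OF f is_ell2_scale[OF g]] unfolding pos_def by blast
  have ff: "Im (cinner f (mat_apply M f)) = 0" and gg: "Im (cinner g (mat_apply M g)) = 0"
    using p f g unfolding pos_def by auto
  have "Im (a + b) = 0" using i1 ff gg unfolding pos_expand[OF M f g] a_def b_def by simp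
  moreover have "Re (a - b) = 0" using i2 ff gg unfolding pos_expand[OF M f g] a_def b_def by simp
  ultimately show ?thesis unfolding a_def[symmetric] b_def[symmetric] by (simp add: complex_eq_iff)
qed

lemma pos_cs:
  assumes M: "bounded_mat M" and p: "pos M" and f: "is_ell2 f" and g: "is_ell2 g"
  shows "(cmod (cinner g (mat_apply M f)))\<^sup>2 \<le> Re (cinner g (mat_apply M g)) * Re (cinner f (mat_apply M f))"
proof -
  define a where "a = Re (cinner f (mat_apply M f))"
  define d where "d = Re (cinner g (mat_apply M g))"
  define c where "c = cinner g (mat_apply M f)"
  have cf: "cinner f (mat_apply M g) = cnj c" unfolding c_def by (rule pos_hermitian[OF M p f g])
  have A: "cinner f (mat_apply M f) = of_real a" unfolding a_def by (rule pos_real[OF p f])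
  have D: "cinner g (mat_apply M g) = of_real d" unfolding d_def by (rule pos_real[OF p g])
  have a0: "a \<ge> 0" and d0: "d \<ge> 0" using p f g unfolding pos_def a_def d_def by auto
  have key: "0 \<le> d - 2 * Re (cnj t * c) + (cmod t)\<^sup>2 * a" for t
  proof -
    have "0 \<le> Re (cinner (\<lambda>x. g x + (-cnj t) * f x) (mat_apply M (\<lambda>x. g x + (-cnj t) * f x)))"
      using p is_ell2_add[OF g is_ell2_scale[OF f]] unfolding pos_def by blast
    also have "cinner (\<lambda>x. g x + (-cnj t) * f x) (mat_apply M (\<lambda>x. g x + (-cnj t) * f x))
       = of_real d - cnj t * c - t * cnj c + t * cnj t * of_real a"
      unfolding pos_expand[OF M g f] cf A D c_def[symmetric] by (simp add: algebra_simps)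
    also have "Re (of_real d - cnj t * c - t * cnj c + t * cnj t * of_real a) = d - 2 * Re (cnj t * c) + (cmod t)\<^sup>2 * a"
      by (simp add: complex_norm_square[symmetric] cmod_power2 algebra_simps power2_eq_square)
    finally show ?thesis .
  qed
  show ?thesis
  proof (cases "a = 0")
    case True
    have "c = 0"
    proof (rule ccontr)
      assume c0: "c \<noteq> 0"
      define t where "t = of_real ((d + 1) / (cmod c)\<^sup>2) * c"
      have cc: "cnj c * c = of_real ((cmod c)\<^sup>2)" by (simp only: complex_norm_square mult.commute)
      have "cnj t * c = of_real ((d + 1) / (cmod c)\<^sup>2) * (cnj c * c)" by (simp add: t_def)
      also have "\<dots> = of_real ((d + 1) / (cmod c)\<^sup>2 * (cmod c)\<^sup>2)" unfolding cc by simp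
      also have "\<dots> = of_real (d + 1)" using c0 by simp
      finally have "Re (cnj t * c) = (d + 1)" by simp
      then show False using key[of t] True d0 by simp
    qed
    then show ?thesis using True by (simp add: a_def[symmetric] d_def[symmetric] c_def[symmetric])
  next
    case False
    then have ap: "a > 0" using a0 by simp
    define t where "t = of_real (1 / a) * c"
    have cc: "cnj c * c = of_real ((cmod c)\<^sup>2)" by (simp only: complex_norm_square mult.commute)
    have "cnj t * c = of_real (1 / a) * (cnj c * c)" by (simp add: t_def)
    also have "\<dots> = of_real ((cmod c)\<^sup>2 / a)" unfolding cc by simp
    finally have "Re (cnj t * c) = (cmod c)\<^sup>2 / a" by simp
    moreover have "(cmod t)\<^sup>2 * a = (cmod c)\<^sup>2 / a" unfolding t_def using ap
      by (simp add: norm_mult norm_divide power_mult_distrib power2_eq_square)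
    ultimately have "0 \<le> d - (cmod c)\<^sup>2 / a" using key[of t] by simp
    then have "(cmod c)\<^sup>2 \<le> d * a" using ap by (simp add: field_simps)
    then show ?thesis by (simp add: a_def[symmetric] d_def[symmetric] c_def[symmetric])
  qed
qed


lemma mat_apply_rank1: "mat_apply (\<lambda>x y. p x * cnj (q y)) f = (\<lambda>x. p x * cinner q f)"
proof
  fix x
  have "(\<Sum>\<^sub>\<infinity>y. p x * cnj (q y) * f y) = (\<Sum>\<^sub>\<infinity>y. p x * (cnj (q y) * f y))"
    by (simp add: mult.assoc)
  also have "\<dots> = p x * (\<Sum>\<^sub>\<infinity>y. cnj (q y) * f y)" by (rule infsum_cmult_right')
  finally show "mat_apply (\<lambda>x y. p x * cnj (q y)) f x = p x * cinner q f"
    by (simp add: mat_apply_def cinner_def)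
qed

lemma cinner_rank1_form:
  assumes "is_ell2 f" "is_ell2 p"
  shows "cinner f (mat_apply (\<lambda>x y. p x * cnj (p y)) f) = of_real ((cmod (cinner p f))\<^sup>2)"
proof -
  have "cinner f (mat_apply (\<lambda>x y. p x * cnj (p y)) f) = cinner f (\<lambda>x. cinner p f * p x)"
    by (simp add: mat_apply_rank1 mult.commute)
  also have "\<dots> = cinner p f * cinner f p" by (rule cinner_scale_right)
  also have "\<dots> = cinner p f * cnj (cinner p f)" by (simp add: cinner_commute[of f p])
  finally show ?thesis by (simp only: complex_norm_square)
qed

lemma trace_diag_summable: "trace D = 1 \<Longrightarrow> (\<lambda>x. D x x) summable_on UNIV"
  unfolding trace_def using infsum_not_exists by fastforce

lemma pure_extreme_aux:
  fixes D1 D2 :: "'a \<Rightarrow> 'a \<Rightarrow> complex"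
  assumes d1: "density_op D1" and d2: "density_op D2" and t: "0 < t" "t < 1"
    and psi: "is_ell2 \<psi>" "nsq \<psi> = 1"
    and eq: "(\<lambda>x y. \<psi> x * cnj (\<psi> y)) = (\<lambda>x y. complex_of_real t * D1 x y + complex_of_real (1 - t) * D2 x y)"
  shows "D1 = (\<lambda>x y. \<psi> x * cnj (\<psi> y))"
proof -
  have B1: "bounded_mat D1" and B2: "bounded_mat D2" using d1 d2 by (auto intro: density_bounded)
  have P1: "pos D1" and P2: "pos D2" using d1 d2 by (auto intro: density_pos)
  have R1: "rowl2 D1" and R2: "rowl2 D2" using B1 B2 by (auto intro: bounded_mat_rowl2)
  have kill: "mat_apply D1 f = (\<lambda>x. 0)" if f: "is_ell2 f" and orth: "cinner \<psi> f = 0" for f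
  proof -
    have D1f: "is_ell2 (mat_apply D1 f)" and D2f: "is_ell2 (mat_apply D2 f)"
      using bounded_mat_apply B1 B2 f by auto
    have "cinner f (mat_apply (\<lambda>x y. \<psi> x * cnj (\<psi> y)) f) = 0"
      using cinner_rank1_form[OF f psi(1)] orth by simp
    moreover have "mat_apply (\<lambda>x y. complex_of_real t * D1 x y + complex_of_real (1 - t) * D2 x y) f
       = (\<lambda>x. complex_of_real t * mat_apply D1 f x + complex_of_real (1 - t) * mat_apply D2 f x)"
      using mat_apply_add_mat[OF rowl2_scale[OF R1] rowl2_scale[OF R2] f] by (simp add: mat_apply_scale_mat)
    moreover have "cinner f (\<lambda>x. complex_of_real t * mat_apply D1 f x + complex_of_real (1 - t) * mat_apply D2 f x)
       = complex_of_real t * cinner f (mat_apply D1 f) + complex_of_real (1 - t) * cinner f (mat_apply D2 f)"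
      using cinner_add_right[OF f is_ell2_scale[OF D1f] is_ell2_scale[OF D2f]] by (simp add: cinner_scale_right)
    ultimately have "complex_of_real t * cinner f (mat_apply D1 f) + complex_of_real (1 - t) * cinner f (mat_apply D2 f) = 0"
      using eq by metis
    then have "t * Re (cinner f (mat_apply D1 f)) + (1 - t) * Re (cinner f (mat_apply D2 f)) = 0"
    proof -
      assume h: "complex_of_real t * cinner f (mat_apply D1 f) + complex_of_real (1 - t) * cinner f (mat_apply D2 f) = 0"
      have "Re (complex_of_real t * cinner f (mat_apply D1 f) + complex_of_real (1 - t) * cinner f (mat_apply D2 f)) = 0"
        unfolding h by simp
      then show ?thesis by simp
    qed
    moreover have "Re (cinner f (mat_apply D1 f)) \<ge> 0" "Re (cinner f (mat_apply D2 f)) \<ge> 0"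
      using P1 P2 f unfolding pos_def by auto
    ultimately have z: "Re (cinner f (mat_apply D1 f)) = 0" using t
      by (smt (verit, best) mult_pos_pos mult_nonneg_nonneg)
    show ?thesis
    proof
      fix x
      have "(cmod (cinner (delta x) (mat_apply D1 f)))\<^sup>2 \<le> Re (cinner (delta x) (mat_apply D1 (delta x))) * Re (cinner f (mat_apply D1 f))"
        by (rule pos_cs[OF B1 P1 f is_ell2_delta])
      then show "mat_apply D1 f x = 0" using z by (simp add: cinner_delta_left)
    qed
  qed
  define m where "m = cinner \<psi> (mat_apply D1 \<psi>)"
  have mreal: "m = of_real (Re m)" unfolding m_def by (rule pos_real[OF P1 psi(1)])
  have col: "D1 x y = cnj (\<psi> y) * mat_apply D1 \<psi> x" for x y
  proof -
    define h where "h = (\<lambda>z. delta y z - cnj (\<psi> y) * \<psi> z)"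
    have sc: "is_ell2 (\<lambda>z. cnj (\<psi> y) * \<psi> z)" by (rule is_ell2_scale[OF psi(1)])
    have h2: "is_ell2 h" unfolding h_def by (rule is_ell2_diff[OF is_ell2_delta sc])
    have "cinner \<psi> h = cinner \<psi> (delta y) - cinner \<psi> (\<lambda>z. cnj (\<psi> y) * \<psi> z)"
      unfolding h_def by (rule cinner_diff_right[OF psi(1) is_ell2_delta sc])
    also have "\<dots> = 0" using psi by (simp add: cinner_delta_right cinner_scale_right cinner_self)
    finally have "mat_apply D1 h = (\<lambda>x. 0)" using kill[OF h2] by simp
    moreover have "mat_apply D1 h = (\<lambda>x. mat_apply D1 (delta y) x - mat_apply D1 (\<lambda>z. cnj (\<psi> y) * \<psi> z) x)"
      unfolding h_def by (rule mat_apply_diff[OF R1 is_ell2_delta sc])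
    ultimately have "mat_apply D1 (delta y) x = mat_apply D1 (\<lambda>z. cnj (\<psi> y) * \<psi> z) x"
      by (metis right_minus_eq)
    then show ?thesis by (simp add: mat_apply_delta mat_apply_scale)
  qed
  have Dpsi: "mat_apply D1 \<psi> x = \<psi> x * m" for x
  proof -
    have "mat_apply D1 \<psi> x = cinner (delta x) (mat_apply D1 \<psi>)" by (simp add: cinner_delta_left)
    also have "\<dots> = cnj (cinner \<psi> (mat_apply D1 (delta x)))"
      by (rule pos_hermitian[OF B1 P1 is_ell2_delta psi(1)])
    also have "mat_apply D1 (delta x) = (\<lambda>z. cnj (\<psi> x) * mat_apply D1 \<psi> z)"
      by (simp add: mat_apply_delta col)
    also have "cinner \<psi> \<dots> = cnj (\<psi> x) * m" by (simp add: cinner_scale_right m_def)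
    finally have "mat_apply D1 \<psi> x = \<psi> x * cnj m" by simp
    moreover have "cnj m = m" using mreal by (metis complex_cnj_complex_of_real)
    ultimately show ?thesis by simp
  qed
  have D1eq: "D1 x y = \<psi> x * cnj (\<psi> y) * m" for x y using col Dpsi by (simp add: algebra_simps)
  have "trace D1 = (\<Sum>\<^sub>\<infinity>x. m * (cnj (\<psi> x) * \<psi> x))"
    unfolding trace_def by (rule infsum_cong) (simp add: D1eq algebra_simps)
  also have "\<dots> = m * cinner \<psi> \<psi>" unfolding cinner_def by (rule infsum_cmult_right')
  also have "\<dots> = m" using psi by (simp add: cinner_self)
  finally have "m = 1" using d1 by (simp add: density_op_def)
  then show ?thesis using D1eq by (intro ext) simp
qed


lemma elem_le_norm:
  assumes "is_ell2 f" shows "cmod (f x) \<le> ell2_norm f"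
proof -
  have "(\<Sum>y\<in>{x}. (cmod (f y))\<^sup>2) \<le> (\<Sum>\<^sub>\<infinity>y. (cmod (f y))\<^sup>2)"
    by (rule finite_sum_le_infsum) (use assms in \<open>auto simp: is_ell2_def\<close>)
  then have "(cmod (f x))\<^sup>2 \<le> nsq f" by (simp add: nsq_def)
  then show ?thesis unfolding ell2_norm_nsq by (simp add: real_le_rsqrt)
qed

lemma abs_cs:
  assumes f: "is_ell2 f" and g: "is_ell2 g"
  shows "(\<Sum>\<^sub>\<infinity>x. cmod (f x) * cmod (g x)) \<le> ell2_norm f * ell2_norm g"
proof -
  define F where "F x = complex_of_real (cmod (f x))" for x
  define G where "G x = complex_of_real (cmod (g x))" for x
  have F2: "is_ell2 F" and G2: "is_ell2 G" using f g by (simp_all add: F_def G_def is_ell2_def)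
  have nF: "ell2_norm F = ell2_norm f" and nG: "ell2_norm G = ell2_norm g"
    by (simp_all add: F_def G_def ell2_norm_def)
  have s: "(\<lambda>x. cmod (f x) * cmod (g x)) summable_on UNIV" by (rule ell2_prod_abs_summable[OF f g])
  have "((\<lambda>x. complex_of_real (cmod (f x) * cmod (g x))) has_sum complex_of_real (\<Sum>\<^sub>\<infinity>x. cmod (f x) * cmod (g x))) UNIV"
    by (rule has_sum_of_real) (use s in simp)
  then have "cinner F G = complex_of_real (\<Sum>\<^sub>\<infinity>x. cmod (f x) * cmod (g x))"
    unfolding cinner_def F_def G_def by (simp add: infsumI)
  moreover have "(\<Sum>\<^sub>\<infinity>x. cmod (f x) * cmod (g x)) \<ge> 0" by (simp add: infsum_nonneg)
  ultimately have "cmod (cinner F G) = (\<Sum>\<^sub>\<infinity>x. cmod (f x) * cmod (g x))" by simp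
  then show ?thesis using cauchy_schwarz[OF F2 G2] nF nG by simp
qed

lemma vecsum_pointwise:
  assumes v: "\<And>j. j \<in> J \<Longrightarrow> is_ell2 (v j)" and s: "(\<lambda>j. ell2_norm (v j)) summable_on J"
  shows "(\<lambda>j. v j x) summable_on J"
proof -
  have "(\<lambda>j. cmod (v j x)) summable_on J"
    by (rule summable_on_comparison_test[OF s]) (use v in \<open>auto intro: elem_le_norm\<close>)
  then show ?thesis using summable_on_iff_abs_summable_on_complex by blast
qed

lemma vecsum_cinner_summable:
  assumes v: "\<And>j. j \<in> J \<Longrightarrow> is_ell2 (v j)" and s: "(\<lambda>j. ell2_norm (v j)) summable_on J"
    and g: "is_ell2 g"
  shows "(\<lambda>(j, x). cnj (g x) * v j x) summable_on (J \<times> UNIV)"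
proof -
  have a: "(\<lambda>p. cnj (g (snd p)) * v (fst p) (snd p)) summable_on (J \<times> UNIV)"
  proof -
    have "(\<lambda>p. norm (cnj (g (snd p)) * v (fst p) (snd p))) summable_on (Sigma J (\<lambda>_. UNIV))"
    proof (rule Infinite_Sum.abs_summable_on_Sigma_iff[THEN iffD2], intro conjI ballI)
      fix j assume "j \<in> J"
      then show "(\<lambda>y. norm (cnj (g (snd (j, y))) * v (fst (j, y)) (snd (j, y)))) summable_on UNIV"
        using ell2_prod_abs_summable[OF g v] by (simp add: norm_mult)
    next
      have b: "(\<Sum>\<^sub>\<infinity>y. norm (cnj (g y) * v j y)) \<le> ell2_norm g * ell2_norm (v j)" if "j \<in> J" for j
        using abs_cs[OF g v[OF that]] by (simp add: norm_mult)
      have "(\<lambda>j. ell2_norm g * ell2_norm (v j)) summable_on J"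
        by (rule summable_on_cmult_right[OF s])
      then have "(\<lambda>j. (\<Sum>\<^sub>\<infinity>y. norm (cnj (g y) * v j y))) summable_on J"
        by (rule summable_on_comparison_test) (use b in \<open>auto intro: infsum_nonneg\<close>)
      then show "(\<lambda>x. norm (\<Sum>\<^sub>\<infinity>y\<in>UNIV. norm (cnj (g (snd (x, y))) * v (fst (x, y)) (snd (x, y))))) summable_on J"
        by (simp add: infsum_nonneg)
    qed
    then show ?thesis using summable_on_iff_abs_summable_on_complex by blast
  qed
  have eqf: "(\<lambda>(j, x). cnj (g x) * v j x) = (\<lambda>p. cnj (g (snd p)) * v (fst p) (snd p))"
    by (rule ext) (simp add: case_prod_beta)
  show ?thesis unfolding eqf by (rule a)
qed

lemma vecsum_cinner:
  assumes v: "\<And>j. j \<in> J \<Longrightarrow> is_ell2 (v j)" and s: "(\<lambda>j. ell2_norm (v j)) summable_on J"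
    and g: "is_ell2 g"
  shows "cinner g (\<lambda>x. \<Sum>\<^sub>\<infinity>j\<in>J. v j x) = (\<Sum>\<^sub>\<infinity>j\<in>J. cinner g (v j))"
proof -
  have "(\<Sum>\<^sub>\<infinity>j\<in>J. \<Sum>\<^sub>\<infinity>x. cnj (g x) * v j x) = (\<Sum>\<^sub>\<infinity>x. \<Sum>\<^sub>\<infinity>j\<in>J. cnj (g x) * v j x)"
    by (rule infsum_swap_banach) (rule vecsum_cinner_summable[OF v s g])
  also have "\<dots> = (\<Sum>\<^sub>\<infinity>x. cnj (g x) * (\<Sum>\<^sub>\<infinity>j\<in>J. v j x))"
    by (simp add: infsum_cmult_right')
  finally show ?thesis by (simp add: cinner_def)
qed

lemma vecsum_ell2:
  assumes v: "\<And>j. j \<in> J \<Longrightarrow> is_ell2 (v j)" and s: "(\<lambda>j. ell2_norm (v j)) summable_on J"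
  shows "is_ell2 (\<lambda>x. \<Sum>\<^sub>\<infinity>j\<in>J. v j x)"
    and "ell2_norm (\<lambda>x. \<Sum>\<^sub>\<infinity>j\<in>J. v j x) \<le> (\<Sum>\<^sub>\<infinity>j\<in>J. ell2_norm (v j))"
proof -
  define h where "h = (\<lambda>x. \<Sum>\<^sub>\<infinity>j\<in>J. v j x)"
  define B where "B = (\<Sum>\<^sub>\<infinity>j\<in>J. ell2_norm (v j))"
  have B0: "B \<ge> 0" unfolding B_def by (rule infsum_nonneg) (simp add: ell2_norm_nonneg)
  have fin: "(\<Sum>x\<in>F. (cmod (h x))\<^sup>2) \<le> B\<^sup>2" if F: "finite F" for F
  proof -
    define S where "S = (\<Sum>x\<in>F. (cmod (h x))\<^sup>2)"
    define hF where "hF x = (if x \<in> F then h x else 0)" for x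
    have hF2: "is_ell2 hF"
      by (rule is_ell2_finite_support) (rule finite_subset[OF _ F], auto simp: hF_def)
    have "nsq hF = (\<Sum>\<^sub>\<infinity>x\<in>F. (cmod (hF x))\<^sup>2)"
      unfolding nsq_def by (rule infsum_cong_neutral) (auto simp: hF_def)
    then have nhF: "nsq hF = S" using F by (simp add: S_def hF_def)
    have "cinner hF h = (\<Sum>x\<in>F. cnj (hF x) * h x)"
      by (rule cinner_finite_support[OF F]) (simp add: hF_def)
    also have "\<dots> = (\<Sum>x\<in>F. of_real ((cmod (h x))\<^sup>2))"
      by (rule sum.cong) (auto simp: hF_def complex_norm_square mult.commute simp del: of_real_power)
    also have "\<dots> = of_real S" by (simp add: S_def)
    finally have c1: "cinner hF h = of_real S" .
    have c2: "cinner hF h = (\<Sum>\<^sub>\<infinity>j\<in>J. cinner hF (v j))"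
      unfolding h_def by (rule vecsum_cinner[OF v s hF2])
    have b: "cmod (cinner hF (v j)) \<le> sqrt S * ell2_norm (v j)" if "j \<in> J" for j
      using cauchy_schwarz[OF hF2 v[OF that]] by (simp add: ell2_norm_nsq nhF)
    have sb: "(\<lambda>j. sqrt S * ell2_norm (v j)) summable_on J" by (rule summable_on_cmult_right[OF s])
    have ab: "(\<lambda>j. norm (cinner hF (v j))) summable_on J"
      by (rule summable_on_comparison_test[OF sb]) (use b in auto)
    have S0: "S \<ge> 0" unfolding S_def by (simp add: sum_nonneg)
    have "S = cmod (cinner hF h)" unfolding c1 using S0 by simp
    also have "\<dots> \<le> (\<Sum>\<^sub>\<infinity>j\<in>J. norm (cinner hF (v j)))"
      unfolding c2 by (rule norm_infsum_bound) (use ab in simp)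
    also have "\<dots> \<le> (\<Sum>\<^sub>\<infinity>j\<in>J. sqrt S * ell2_norm (v j))"
      by (rule infsum_mono[OF ab sb]) (use b in simp)
    also have "\<dots> = sqrt S * B" unfolding B_def by (rule infsum_cmult_right')
    finally have "S \<le> sqrt S * B" .
    then have ss: "sqrt S * sqrt S \<le> sqrt S * B" using S0 by (simp only: real_sqrt_mult_self abs_of_nonneg)
    have "sqrt S \<le> B"
    proof (cases "sqrt S = 0")
      case True then show ?thesis using B0 by simp
    next
      case False
      then have "sqrt S > 0" using S0 by simp
      then show ?thesis using mult_le_cancel_left_pos[of "sqrt S" "sqrt S" B] ss by blast
    qed
    then have "(sqrt S)\<^sup>2 \<le> B\<^sup>2" using S0 by (intro power_mono) auto
    then show ?thesis using S0 by (simp add: S_def)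
  qed
  have sm: "is_ell2 h" unfolding is_ell2_def
    by (rule nonneg_bdd_above_summable_on) (use fin in \<open>auto intro!: bdd_aboveI2\<close>)
  then show "is_ell2 (\<lambda>x. \<Sum>\<^sub>\<infinity>j\<in>J. v j x)" by (simp add: h_def)
  have "nsq h \<le> B\<^sup>2" unfolding nsq_def[of h]
    by (rule infsum_le_finite_sums) (use sm fin in \<open>auto simp: is_ell2_def\<close>)
  then have "sqrt (nsq h) \<le> sqrt (B\<^sup>2)" by (rule real_sqrt_le_mono)
  then have "sqrt (nsq h) \<le> B" using B0 by simp
  then show "ell2_norm (\<lambda>x. \<Sum>\<^sub>\<infinity>j\<in>J. v j x) \<le> B" by (simp add: ell2_norm_nsq h_def)
qed


lemma summable_on_sum_real:
  fixes f :: "'i \<Rightarrow> 'a \<Rightarrow> real"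
  assumes "finite I" "\<And>i. i \<in> I \<Longrightarrow> f i summable_on A"
  shows "(\<lambda>x. \<Sum>i\<in>I. f i x) summable_on A"
  using assms
proof (induction I rule: finite_induct)
  case (insert a F) then show ?case by (simp add: summable_on_add)
qed simp

lemma infsum_sum_swap_real:
  fixes f :: "'i \<Rightarrow> 'a \<Rightarrow> real"
  assumes "\<And>i. i \<in> I \<Longrightarrow> f i summable_on A"
  shows "(\<Sum>\<^sub>\<infinity>x\<in>A. \<Sum>i\<in>I. f i x) = (\<Sum>i\<in>I. \<Sum>\<^sub>\<infinity>x\<in>A. f i x)"
  using assms
proof (induction I rule: infinite_finite_induct)
  case (insert i F)
  have "(\<lambda>x. \<Sum>i\<in>F. f i x) summable_on A"
    by (rule summable_on_sum_real) (use insert in auto)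
  then show ?case using insert by (simp add: infsum_add)
qed auto

lemma ortho_norm:
  assumes "orthonormal_fam n e" "i < n"
  shows "is_ell2 (e i)" "nsq (e i) = 1" "ell2_norm (e i) = 1"
proof -
  show "is_ell2 (e i)" using assms by (simp add: orthonormal_fam_def)
  have "cinner (e i) (e i) = 1" using assms by (simp add: orthonormal_fam_def)
  then show "nsq (e i) = 1" by (simp add: cinner_self)
  then show "ell2_norm (e i) = 1" by (simp add: ell2_norm_nsq)
qed

lemma ell2_norm_cnj: "ell2_norm (\<lambda>y. cnj (f y)) = ell2_norm f"
  by (simp add: ell2_norm_def)

lemma cs_sum_bessel:
  assumes e: "orthonormal_fam n e" and f: "orthonormal_fam n f" and p: "is_ell2 p" and q: "is_ell2 q"
  shows "(\<Sum>i<n. cmod (cinner q (e i)) * cmod (cinner (f i) p)) \<le> ell2_norm q * ell2_norm p"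
proof -
  have b1: "(\<Sum>i<n. (cmod (cinner q (e i)))\<^sup>2) \<le> nsq q"
    using bessel[OF e q] by (simp add: cinner_commute[of q])
  have b2: "(\<Sum>i<n. (cmod (cinner (f i) p))\<^sup>2) \<le> nsq p"
    using bessel[OF f p] by simp
  have "(\<Sum>i<n. cmod (cinner q (e i)) * cmod (cinner (f i) p))\<^sup>2
      \<le> (\<Sum>i<n. (cmod (cinner q (e i)))\<^sup>2) * (\<Sum>i<n. (cmod (cinner (f i) p))\<^sup>2)"
    by (rule Cauchy_Schwarz_ineq_sum)
  also have "\<dots> \<le> nsq q * nsq p"
    using b1 b2 by (intro mult_mono) (auto intro: sum_nonneg nsq_nonneg)
  also have "\<dots> = (ell2_norm q * ell2_norm p)\<^sup>2"
    by (simp add: power_mult_distrib ell2_norm_sq)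
  finally show ?thesis
    using ell2_norm_nonneg by (meson mult_nonneg_nonneg power2_le_imp_le)
qed

context
  fixes p q :: "'j \<Rightarrow> 'a \<Rightarrow> complex" and J :: "'j set"
  assumes p: "\<And>j. j \<in> J \<Longrightarrow> is_ell2 (p j)" and q: "\<And>j. j \<in> J \<Longrightarrow> is_ell2 (q j)"
    and s: "(\<lambda>j. ell2_norm (p j) * ell2_norm (q j)) summable_on J"
begin

definition "nucM = (\<lambda>x y. \<Sum>\<^sub>\<infinity>j\<in>J. p j x * cnj (q j y))"

lemma nuc_row:
  shows "is_ell2 (\<lambda>y. nucM x y)"
    and "\<And>e. is_ell2 e \<Longrightarrow> mat_apply nucM e x = (\<Sum>\<^sub>\<infinity>j\<in>J. p j x * cinner (q j) e)"
proof -
  define v where "v j = (\<lambda>y. p j x * cnj (q j y))" for j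
  have v2: "is_ell2 (v j)" if "j \<in> J" for j
    unfolding v_def by (rule is_ell2_scale[OF is_ell2_cnj[OF q[OF that]]])
  have vn: "ell2_norm (v j) \<le> ell2_norm (p j) * ell2_norm (q j)" if "j \<in> J" for j
    unfolding v_def ell2_norm_scale ell2_norm_cnj
    using elem_le_norm[OF p[OF that], of x] ell2_norm_nonneg[of "q j"] by (simp add: mult_right_mono)
  have vs: "(\<lambda>j. ell2_norm (v j)) summable_on J"
    by (rule summable_on_comparison_test[OF s]) (use vn in \<open>auto simp: ell2_norm_nonneg\<close>)
  have row: "(\<lambda>y. nucM x y) = (\<lambda>y. \<Sum>\<^sub>\<infinity>j\<in>J. v j y)" by (simp add: nucM_def v_def)
  show "is_ell2 (\<lambda>y. nucM x y)" unfolding row by (rule vecsum_ell2(1)[OF v2 vs])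
  fix e :: "'a \<Rightarrow> complex" assume e: "is_ell2 e"
  have "mat_apply nucM e x = cinner (\<lambda>y. cnj (e y)) (\<lambda>y. nucM x y)"
    by (simp add: mat_apply_def cinner_def mult.commute)
  also have "\<dots> = (\<Sum>\<^sub>\<infinity>j\<in>J. cinner (\<lambda>y. cnj (e y)) (v j))"
    unfolding row by (rule vecsum_cinner[OF v2 vs is_ell2_cnj[OF e]])
  also have "\<dots> = (\<Sum>\<^sub>\<infinity>j\<in>J. p j x * cinner (q j) e)"
  proof (rule infsum_cong)
    fix j
    have "cinner (\<lambda>y. cnj (e y)) (v j) = (\<Sum>\<^sub>\<infinity>y. p j x * (cnj (q j y) * e y))"
      unfolding cinner_def v_def by (simp add: algebra_simps)
    also have "\<dots> = p j x * cinner (q j) e" unfolding cinner_def by (rule infsum_cmult_right')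
    finally show "cinner (\<lambda>y. cnj (e y)) (v j) = p j x * cinner (q j) e" .
  qed
  finally show "mat_apply nucM e x = (\<Sum>\<^sub>\<infinity>j\<in>J. p j x * cinner (q j) e)" .
qed

lemma nuc_rowl2: "rowl2 nucM"
  using nuc_row(1) by (simp add: rowl2_def)

lemma nuc_form:
  assumes e: "is_ell2 e" and f: "is_ell2 f"
  shows "cinner f (mat_apply nucM e) = (\<Sum>\<^sub>\<infinity>j\<in>J. cinner (q j) e * cinner f (p j))"
    and "(\<lambda>j. cmod (cinner (q j) e * cinner f (p j))) summable_on J"
proof -
  define w where "w j = (\<lambda>x. cinner (q j) e * p j x)" for j
  have w2: "is_ell2 (w j)" if "j \<in> J" for j unfolding w_def by (rule is_ell2_scale[OF p[OF that]])
  have wn: "ell2_norm (w j) \<le> ell2_norm e * (ell2_norm (p j) * ell2_norm (q j))" if "j \<in> J" for j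
  proof -
    have "ell2_norm (w j) = cmod (cinner (q j) e) * ell2_norm (p j)" unfolding w_def ell2_norm_scale ..
    also have "\<dots> \<le> (ell2_norm (q j) * ell2_norm e) * ell2_norm (p j)"
      by (rule mult_right_mono[OF cauchy_schwarz[OF q[OF that] e] ell2_norm_nonneg])
    finally show ?thesis by (simp add: algebra_simps)
  qed
  have ws: "(\<lambda>j. ell2_norm (w j)) summable_on J"
    by (rule summable_on_comparison_test[OF summable_on_cmult_right[OF s]]) (use wn in \<open>auto simp: ell2_norm_nonneg\<close>)
  have ap: "mat_apply nucM e = (\<lambda>x. \<Sum>\<^sub>\<infinity>j\<in>J. w j x)"
    by (rule ext) (simp add: nuc_row(2)[OF e] w_def mult.commute)
  show "cinner f (mat_apply nucM e) = (\<Sum>\<^sub>\<infinity>j\<in>J. cinner (q j) e * cinner f (p j))"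
    unfolding ap by (simp only: vecsum_cinner[OF w2 ws f]) (simp add: w_def cinner_scale_right)
  have b: "cmod (cinner (q j) e * cinner f (p j)) \<le> (ell2_norm e * ell2_norm f) * (ell2_norm (p j) * ell2_norm (q j))"
    if "j \<in> J" for j
  proof -
    have "cmod (cinner (q j) e * cinner f (p j)) \<le> (ell2_norm (q j) * ell2_norm e) * (ell2_norm f * ell2_norm (p j))"
      unfolding norm_mult
      by (rule mult_mono[OF cauchy_schwarz[OF q[OF that] e] cauchy_schwarz[OF f p[OF that]]])
         (auto intro: mult_nonneg_nonneg ell2_norm_nonneg)
    then show ?thesis by (simp add: algebra_simps)
  qed
  show "(\<lambda>j. cmod (cinner (q j) e * cinner f (p j))) summable_on J"
    by (rule summable_on_comparison_test[OF summable_on_cmult_right[OF s]]) (use b in auto)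
qed

lemma nuc_tsum:
  assumes e: "orthonormal_fam n e" and f: "orthonormal_fam n f"
  shows "tsum nucM n e f \<le> (\<Sum>\<^sub>\<infinity>j\<in>J. ell2_norm (p j) * ell2_norm (q j))"
proof -
  have ei: "is_ell2 (e i)" and fi: "is_ell2 (f i)" if "i < n" for i
    using ortho_norm e f that by auto
  have "tsum nucM n e f = (\<Sum>i<n. cmod (\<Sum>\<^sub>\<infinity>j\<in>J. cinner (q j) (e i) * cinner (f i) (p j)))"
    unfolding tsum_def by (rule sum.cong) (auto simp: nuc_form(1)[OF ei fi])
  also have "\<dots> \<le> (\<Sum>i<n. \<Sum>\<^sub>\<infinity>j\<in>J. cmod (cinner (q j) (e i) * cinner (f i) (p j)))"
    by (rule sum_mono, rule norm_infsum_bound) (use nuc_form(2)[OF ei fi] in simp)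
  also have "\<dots> = (\<Sum>\<^sub>\<infinity>j\<in>J. \<Sum>i<n. cmod (cinner (q j) (e i) * cinner (f i) (p j)))"
    by (rule infsum_sum_swap_real[symmetric]) (use nuc_form(2)[OF ei fi] in simp)
  also have "\<dots> \<le> (\<Sum>\<^sub>\<infinity>j\<in>J. ell2_norm (p j) * ell2_norm (q j))"
  proof (rule infsum_mono)
    show "(\<lambda>j. \<Sum>i<n. cmod (cinner (q j) (e i) * cinner (f i) (p j))) summable_on J"
      by (rule summable_on_sum_real) (use nuc_form(2)[OF ei fi] in auto)
    show "(\<lambda>j. ell2_norm (p j) * ell2_norm (q j)) summable_on J" by (rule s)
    fix j assume j: "j \<in> J"
    show "(\<Sum>i<n. cmod (cinner (q j) (e i) * cinner (f i) (p j))) \<le> ell2_norm (p j) * ell2_norm (q j)"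
      using cs_sum_bessel[OF e f p[OF j] q[OF j]] by (simp add: norm_mult mult.commute)
  qed
  finally show ?thesis .
qed

end


lemma nuclear:
  fixes p q :: "'j \<Rightarrow> 'a \<Rightarrow> complex" and J :: "'j set"
  assumes p: "\<And>j. j \<in> J \<Longrightarrow> is_ell2 (p j)" and q: "\<And>j. j \<in> J \<Longrightarrow> is_ell2 (q j)"
    and s: "(\<lambda>j. ell2_norm (p j) * ell2_norm (q j)) summable_on J"
  shows "tcl (\<lambda>x y. \<Sum>\<^sub>\<infinity>j\<in>J. p j x * cnj (q j y))"
    and "trace_norm (\<lambda>x y. \<Sum>\<^sub>\<infinity>j\<in>J. p j x * cnj (q j y)) \<le> (\<Sum>\<^sub>\<infinity>j\<in>J. ell2_norm (p j) * ell2_norm (q j))"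
proof -
  have nd: "nucM p q J = (\<lambda>x y. \<Sum>\<^sub>\<infinity>j\<in>J. p j x * cnj (q j y))"
    by (rule nucM_def[where p=p and q=q and J=J, OF p q s])
  have b: "t \<le> (\<Sum>\<^sub>\<infinity>j\<in>J. ell2_norm (p j) * ell2_norm (q j))"
    if tin: "t \<in> trace_norm_set (\<lambda>x y. \<Sum>\<^sub>\<infinity>j\<in>J. p j x * cnj (q j y))" for t
  proof -
    obtain n e f where t: "t = tsum (\<lambda>x y. \<Sum>\<^sub>\<infinity>j\<in>J. p j x * cnj (q j y)) n e f"
      and oe: "orthonormal_fam n e" and of: "orthonormal_fam n f"
      using tin unfolding tns_iff by blast
    have "tsum (nucM p q J) n e f \<le> (\<Sum>\<^sub>\<infinity>j\<in>J. ell2_norm (p j) * ell2_norm (q j))"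
      by (rule nuc_tsum[where p=p and q=q and J=J, OF p q s oe of])
    then show ?thesis unfolding t nd .
  qed
  have r: "rowl2 (nucM p q J)" by (rule nuc_rowl2[where p=p and q=q and J=J, OF p q s])
  show "tcl (\<lambda>x y. \<Sum>\<^sub>\<infinity>j\<in>J. p j x * cnj (q j y))"
    unfolding tcl_def
  proof
    show "rowl2 (\<lambda>x y. \<Sum>\<^sub>\<infinity>j\<in>J. p j x * cnj (q j y))" using r unfolding nd .
    show "bdd_above (trace_norm_set (\<lambda>x y. \<Sum>\<^sub>\<infinity>j\<in>J. p j x * cnj (q j y)))"
      by (rule bdd_aboveI) (rule b)
  qed
  show "trace_norm (\<lambda>x y. \<Sum>\<^sub>\<infinity>j\<in>J. p j x * cnj (q j y)) \<le> (\<Sum>\<^sub>\<infinity>j\<in>J. ell2_norm (p j) * ell2_norm (q j))"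
    by (rule trace_norm_least) (rule b)
qed

lemma rank1_tcl:
  assumes p: "is_ell2 p" and q: "is_ell2 q"
  shows "tcl (\<lambda>x y. p x * cnj (q y))" and "trace_norm (\<lambda>x y. p x * cnj (q y)) \<le> ell2_norm p * ell2_norm q"
proof -
  have e: "(\<lambda>x y. \<Sum>\<^sub>\<infinity>j\<in>{()}. (\<lambda>_. p) j x * cnj ((\<lambda>_. q) j y)) = (\<lambda>x y. p x * cnj (q y))"
    by simp
  have s: "(\<lambda>j. ell2_norm ((\<lambda>_. p) j) * ell2_norm ((\<lambda>_. q) j)) summable_on {()}" by simp
  show "tcl (\<lambda>x y. p x * cnj (q y))"
    using nuclear(1)[of "{()}" "\<lambda>_. p" "\<lambda>_. q"] p q s unfolding e by simp
  show "trace_norm (\<lambda>x y. p x * cnj (q y)) \<le> ell2_norm p * ell2_norm q"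
    using nuclear(2)[of "{()}" "\<lambda>_. p" "\<lambda>_. q"] p q s unfolding e by simp
qed

lemma rank1_tn_exact:
  assumes p: "is_ell2 p" and q: "is_ell2 q"
  shows "trace_norm (\<lambda>x y. p x * cnj (q y)) = ell2_norm p * ell2_norm q"
proof (cases "nsq p = 0 \<or> nsq q = 0")
  case True
  have "p x * cnj (q y) = 0" for x y
    using True nsq_zero_imp[OF p, of x] nsq_zero_imp[OF q, of y] by auto
  then have "(\<lambda>x y. p x * cnj (q y)) = (\<lambda>x y. 0)" by (intro ext) simp
  moreover have "ell2_norm p * ell2_norm q = 0" using True by (auto simp: ell2_norm_nsq)
  ultimately show ?thesis by (auto simp: trace_norm_zero)
next
  case False
  then have pp: "nsq p > 0" and qp: "nsq q > 0" using nsq_nonneg[of p] nsq_nonneg[of q] by auto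
  define e where "e = (\<lambda>x. complex_of_real (1 / sqrt (nsq q)) * q x)"
  define f where "f = (\<lambda>x. complex_of_real (1 / sqrt (nsq p)) * p x)"
  have e2: "is_ell2 e" unfolding e_def by (rule is_ell2_scale[OF q])
  have f2: "is_ell2 f" unfolding f_def by (rule is_ell2_scale[OF p])
  have ne: "nsq e = 1" unfolding e_def
    by (simp only: nsq_scale) (use qp in \<open>simp add: power_divide norm_divide\<close>)
  have nf: "nsq f = 1" unfolding f_def
    by (simp only: nsq_scale) (use pp in \<open>simp add: power_divide norm_divide\<close>)
  have "cinner f (mat_apply (\<lambda>x y. p x * cnj (q y)) e) = cinner q e * cinner f p"
  proof -
    have "mat_apply (\<lambda>x y. p x * cnj (q y)) e = (\<lambda>x. cinner q e * p x)"
      by (simp add: mat_apply_rank1 mult.commute)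
    then show ?thesis by (simp add: cinner_scale_right)
  qed
  also have "cinner q e = complex_of_real (1 / sqrt (nsq q)) * of_real (nsq q)"
    unfolding e_def cinner_scale_right cinner_self ..
  also have "cinner f p = complex_of_real (1 / sqrt (nsq p)) * of_real (nsq p)"
    unfolding f_def cinner_scale_left cinner_self by simp
  also have "complex_of_real (1 / sqrt (nsq q)) * of_real (nsq q) = of_real (sqrt (nsq q))"
  proof -
    have "(1 / sqrt (nsq q)) * nsq q = sqrt (nsq q)" using qp by (simp add: real_div_sqrt)
    then show ?thesis by (metis of_real_mult)
  qed
  also have "complex_of_real (1 / sqrt (nsq p)) * of_real (nsq p) = of_real (sqrt (nsq p))"
  proof -
    have "(1 / sqrt (nsq p)) * nsq p = sqrt (nsq p)" using pp by (simp add: real_div_sqrt)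
    then show ?thesis by (metis of_real_mult)
  qed
  finally have "cinner f (mat_apply (\<lambda>x y. p x * cnj (q y)) e) = of_real (sqrt (nsq q) * sqrt (nsq p))"
    by simp
  then have "tsum (\<lambda>x y. p x * cnj (q y)) (Suc 0) (\<lambda>_. e) (\<lambda>_. f) = ell2_norm p * ell2_norm q"
    by (simp add: tsum_def ell2_norm_nsq norm_mult mult.commute nsq_nonneg)
  moreover have "tsum (\<lambda>x y. p x * cnj (q y)) (Suc 0) (\<lambda>_. e) (\<lambda>_. f) \<in> trace_norm_set (\<lambda>x y. p x * cnj (q y))"
    unfolding tns_iff using orthonormal_single[OF e2 ne] orthonormal_single[OF f2 nf] by blast
  moreover have bdd: "bdd_above (trace_norm_set (\<lambda>x y. p x * cnj (q y)))"
    using rank1_tcl(1)[OF p q] by (simp add: tcl_def)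
  ultimately have "ell2_norm p * ell2_norm q \<le> trace_norm (\<lambda>x y. p x * cnj (q y))"
    using trace_norm_upper[OF bdd] by simp
  then show ?thesis using rank1_tcl(2)[OF p q] by simp
qed

lemma entry_le_tn:
  assumes "tcl M" shows "cmod (M a b) \<le> trace_norm M"
proof -
  have o1: "orthonormal_fam (Suc 0) (\<lambda>_. delta b)" by (rule orthonormal_single[OF is_ell2_delta nsq_delta])
  have o2: "orthonormal_fam (Suc 0) (\<lambda>_. delta a)" by (rule orthonormal_single[OF is_ell2_delta nsq_delta])
  have "tsum M (Suc 0) (\<lambda>_. delta b) (\<lambda>_. delta a) \<in> trace_norm_set M"
    unfolding tns_iff using o1 o2 by blast
  moreover have "tsum M (Suc 0) (\<lambda>_. delta b) (\<lambda>_. delta a) = cmod (M a b)"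
    by (simp add: tsum_def cinner_delta_left mat_apply_delta)
  moreover have bdd: "bdd_above (trace_norm_set M)" using assms by (simp add: tcl_def)
  ultimately show ?thesis using trace_norm_upper[OF bdd] by simp
qed

lemma is_ell2_tensor:
  assumes f: "is_ell2 f" and g: "is_ell2 g"
  shows "is_ell2 (\<lambda>(s, t). f s * g t)" and "nsq (\<lambda>(s, t). f s * g t) = nsq f * nsq g"
proof -
  define h where "h = (\<lambda>p. (cmod (f (fst p)))\<^sup>2 * (cmod (g (snd p)))\<^sup>2)"
  have hs: "h summable_on (Sigma UNIV (\<lambda>_. UNIV))"
  proof -
    have "(\<lambda>p. norm (h p)) summable_on (Sigma UNIV (\<lambda>_. UNIV))"
    proof (rule Infinite_Sum.abs_summable_on_Sigma_iff[THEN iffD2], intro conjI ballI)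
      fix s :: 'a
      show "(\<lambda>t. norm (h (s, t))) summable_on UNIV"
        using g unfolding h_def is_ell2_def by (simp add: summable_on_cmult_right)
    next
      have "(\<lambda>s. (cmod (f s))\<^sup>2 * nsq g) summable_on UNIV"
        using f unfolding is_ell2_def by (rule summable_on_cmult_left)
      moreover have "(\<Sum>\<^sub>\<infinity>t. norm (h (s, t))) = (cmod (f s))\<^sup>2 * nsq g" for s
        unfolding h_def nsq_def by (simp add: infsum_cmult_right')
      ultimately show "(\<lambda>s. norm (\<Sum>\<^sub>\<infinity>t\<in>UNIV. norm (h (s, t)))) summable_on UNIV"
        by (simp add: nsq_nonneg)
    qed
    then show ?thesis by (simp add: h_def)
  qed
  have eq: "(\<lambda>p. (cmod ((\<lambda>(s, t). f s * g t) p))\<^sup>2) = h"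
    by (auto simp: h_def norm_mult power_mult_distrib)
  show "is_ell2 (\<lambda>(s, t). f s * g t)" unfolding is_ell2_def eq using hs by simp
  have "nsq (\<lambda>(s, t). f s * g t) = (\<Sum>\<^sub>\<infinity>p\<in>Sigma UNIV (\<lambda>_. UNIV). h p)"
    unfolding nsq_def eq by simp
  also have "\<dots> = (\<Sum>\<^sub>\<infinity>s. \<Sum>\<^sub>\<infinity>t. h (s, t))"
    using infsum_Sigma'_banach[of "\<lambda>s t. h (s, t)" UNIV "\<lambda>_. UNIV"] hs by (simp add: case_prod_beta)
  also have "\<dots> = (\<Sum>\<^sub>\<infinity>s. (cmod (f s))\<^sup>2 * nsq g)"
    unfolding h_def nsq_def by (simp add: infsum_cmult_right')
  also have "\<dots> = nsq f * nsq g" unfolding nsq_def[of f] by (rule infsum_cmult_left')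
  finally show "nsq (\<lambda>(s, t). f s * g t) = nsq f * nsq g" .
qed

lemma rowl2_tensor:
  assumes "rowl2 X" "rowl2 Y" shows "rowl2 (tensor_op X Y)"
  using assms is_ell2_tensor(1) unfolding rowl2_def tensor_op_def by (auto simp: case_prod_beta)

lemma pos_diag:
  assumes "bounded_mat M" "pos M" shows "M x x = of_real (Re (M x x))" "Re (M x x) \<ge> 0"
proof -
  have "cinner (delta x) (mat_apply M (delta x)) = M x x"
    by (simp add: mat_apply_delta cinner_delta_left)
  then show "M x x = of_real (Re (M x x))" "Re (M x x) \<ge> 0"
    using assms(2) is_ell2_delta[of x] unfolding pos_def by (auto simp: complex_eq_iff)
qed

lemma pos_trace_zero:
  assumes B: "bounded_mat M" and P: "pos M" and s: "(\<lambda>x. M x x) summable_on UNIV" and t: "trace M = 0"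
  shows "M = (\<lambda>x y. 0)"
proof -
  have d: "M x x = 0" for x
  proof -
    have sr: "(\<lambda>x. Re (M x x)) summable_on UNIV" using summable_on_Re[OF s] by simp
    have "(\<Sum>\<^sub>\<infinity>x. Re (M x x)) = Re (trace M)" unfolding trace_def using infsum_Re[OF s] by simp
    then have "(\<Sum>\<^sub>\<infinity>x. Re (M x x)) \<le> 0" using t by simp
    then have "Re (M x x) = 0"
      using nonneg_infsum_le_0D[of "\<lambda>x. Re (M x x)" UNIV x] sr pos_diag(2)[OF B P] by blast
    then show ?thesis using pos_diag(1)[OF B P, of x] by simp
  qed
  show ?thesis
  proof (intro ext)
    fix x y
    have "(cmod (cinner (delta x) (mat_apply M (delta y))))\<^sup>2
        \<le> Re (cinner (delta x) (mat_apply M (delta x))) * Re (cinner (delta y) (mat_apply M (delta y)))"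
      by (rule pos_cs[OF B P is_ell2_delta is_ell2_delta])
    then show "M x y = 0" by (simp add: mat_apply_delta cinner_delta_left d)
  qed
qed


lemma density_trace_summable: "density_op D \<Longrightarrow> (\<lambda>x. D x x) summable_on UNIV"
  unfolding density_op_def by (auto intro: trace_diag_summable)

lemma trace_lincomb:
  assumes "(\<lambda>x. A x x) summable_on UNIV" "(\<lambda>x. B x x) summable_on UNIV"
  shows "trace (\<lambda>x y. A x y + c * B x y) = trace A + c * trace B"
  unfolding trace_def using infsum_add[OF assms(1) summable_on_cmult_right[OF assms(2)]]
  by (simp add: infsum_cmult_right')

lemma rank1_diag: "(\<lambda>x. p x * cnj (p x)) summable_on UNIV" "trace (\<lambda>x y. p x * cnj (p y)) = of_real (nsq p)"
  if "is_ell2 p"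
proof -
  show "(\<lambda>x. p x * cnj (p x)) summable_on UNIV"
    using ell2_inner_summable[OF that that] by (simp add: mult.commute)
  show "trace (\<lambda>x y. p x * cnj (p y)) = of_real (nsq p)"
    using cinner_self[of p] by (simp add: trace_def cinner_def mult.commute)
qed

lemma rank1_pos: "pos (\<lambda>x y. p x * cnj (p y))" if "is_ell2 p"
  unfolding pos_def using cinner_rank1_form[OF _ that] by simp

lemma rank1_density:
  assumes "is_ell2 u" "nsq u = 1"
  shows "density_op (\<lambda>x y. u x * cnj (u y))"
  unfolding density_op_def
  using rank1_pos[OF assms(1)] rank1_diag(2)[OF assms(1)] assms(2) tcl_trace_class[OF rank1_tcl(1)[OF assms(1) assms(1)]]
  by (simp add: pos_def)

lemma pos_lincomb:
  assumes A: "bounded_mat A" and B: "bounded_mat B" and f: "is_ell2 f"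
  shows "cinner f (mat_apply (\<lambda>x y. A x y + c * B x y) f) = cinner f (mat_apply A f) + c * cinner f (mat_apply B f)"
proof -
  have Af: "is_ell2 (mat_apply A f)" and Bf: "is_ell2 (mat_apply B f)" using A B f bounded_mat_apply by auto
  have "mat_apply (\<lambda>x y. A x y + c * B x y) f = (\<lambda>x. mat_apply A f x + c * mat_apply B f x)"
    using mat_apply_add_mat[OF bounded_mat_rowl2[OF A] rowl2_scale[OF bounded_mat_rowl2[OF B]] f]
    by (simp add: mat_apply_scale_mat)
  then show ?thesis using cinner_add_right[OF f Af is_ell2_scale[OF Bf]] by (simp add: cinner_scale_right)
qed

lemma decompose:
  fixes D :: "'a \<Rightarrow> 'a \<Rightarrow> complex"
  assumes d: "density_op D"
  shows "D \<in> rank_one_projs \<or> (\<exists>z c lam D2. c > 0 \<and> 0 < lam \<and> lam < 1 \<and> density_op D2 \<and>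
      is_ell2 (\<lambda>x. complex_of_real c * D x z) \<and> nsq (\<lambda>x. complex_of_real c * D x z) = 1 \<and>
      D = (\<lambda>x y. complex_of_real lam * ((complex_of_real c * D x z) * cnj (complex_of_real c * D y z)) + complex_of_real (1 - lam) * D2 x y) \<and>
      D2 = (\<lambda>x y. complex_of_real (1 / (1 - lam)) * (D x y + complex_of_real (- lam) * ((complex_of_real c * D x z) * cnj (complex_of_real c * D y z)))))"
proof -
  have B: "bounded_mat D" and P: "pos D" and T: "tcl D" and tr: "trace D = 1"
    using d by (auto intro: density_bounded density_pos density_tcl simp: density_op_def)
  have ds: "(\<lambda>x. D x x) summable_on UNIV" by (rule density_trace_summable[OF d])
  obtain z where z: "D z z \<noteq> 0"
  proof (rule ccontr)
    assume "\<not> thesis"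
    with that have "\<forall>z. D z z = 0" by blast
    then have "trace D = 0" by (simp add: trace_def)
    then show False using tr by simp
  qed
  define a where "a = Re (D z z)"
  have Dzz: "D z z = of_real a" unfolding a_def by (rule pos_diag(1)[OF B P])
  have a00: "a \<ge> 0" using pos_diag(2)[OF B P, of z] by (simp add: a_def)
  have "a \<noteq> 0" using z Dzz by auto
  then have a: "a > 0" using a00 by simp
  define \<phi> where "\<phi> = (\<lambda>x. D x z)"
  have phi2: "is_ell2 \<phi>" unfolding \<phi>_def by (rule col_bound(1)[OF T])
  have phiD: "\<phi> = mat_apply D (delta z)" by (simp add: mat_apply_delta \<phi>_def)
  have csb: "(cmod (cinner \<phi> f))\<^sup>2 \<le> a * Re (cinner f (mat_apply D f))" if f: "is_ell2 f" for f
  proof -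
    have "cinner \<phi> f = cnj (cinner f (mat_apply D (delta z)))" by (simp add: phiD cinner_commute[of _ f])
    also have "cinner f (mat_apply D (delta z)) = cnj (cinner (delta z) (mat_apply D f))"
      by (rule pos_hermitian[OF B P f is_ell2_delta])
    finally have e: "cinner \<phi> f = cinner (delta z) (mat_apply D f)" by simp
    have "(cmod (cinner (delta z) (mat_apply D f)))\<^sup>2 \<le> Re (cinner (delta z) (mat_apply D (delta z))) * Re (cinner f (mat_apply D f))"
      by (rule pos_cs[OF B P f is_ell2_delta])
    also have "Re (cinner (delta z) (mat_apply D (delta z))) = a"
      by (simp add: mat_apply_delta cinner_delta_left a_def)
    finally show ?thesis using e by simp
  qed
  define R where "R = (\<lambda>x y. \<phi> x * cnj (\<phi> y))"
  define N where "N = (\<lambda>x y. D x y + complex_of_real (- (1 / a)) * R x y)"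
  have TR: "tcl R" unfolding R_def by (rule rank1_tcl(1)[OF phi2 phi2])
  have TN: "tcl N" unfolding N_def by (rule tcl_lincomb(1)[OF T TR])
  have BN: "bounded_mat N" by (rule tcl_bounded[OF TN])
  have BR: "bounded_mat R" by (rule tcl_bounded[OF TR])
  have PN: "pos N" unfolding pos_def
  proof (intro allI impI)
    fix f :: "'a \<Rightarrow> complex" assume f: "is_ell2 f"
    have "cinner f (mat_apply N f) = cinner f (mat_apply D f) + complex_of_real (- (1 / a)) * cinner f (mat_apply R f)"
      unfolding N_def by (rule pos_lincomb[OF B BR f])
    also have "cinner f (mat_apply R f) = of_real ((cmod (cinner \<phi> f))\<^sup>2)"
      unfolding R_def by (rule cinner_rank1_form[OF f phi2])
    finally have e: "cinner f (mat_apply N f) = cinner f (mat_apply D f) - of_real ((cmod (cinner \<phi> f))\<^sup>2 / a)"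
      by simp
    have "Im (cinner f (mat_apply D f)) = 0" "Re (cinner f (mat_apply D f)) \<ge> 0" using P f by (auto simp: pos_def)
    moreover have "(cmod (cinner \<phi> f))\<^sup>2 / a \<le> Re (cinner f (mat_apply D f))"
      using csb[OF f] a by (simp add: field_simps mult.commute)
    ultimately show "Im (cinner f (mat_apply N f)) = 0 \<and> 0 \<le> Re (cinner f (mat_apply N f))"
      unfolding e by simp
  qed
  have Rs: "(\<lambda>x. R x x) summable_on UNIV" unfolding R_def by (rule rank1_diag(1)[OF phi2])
  have Ns: "(\<lambda>x. N x x) summable_on UNIV" unfolding N_def
    by (rule summable_on_add[OF ds summable_on_cmult_right[OF Rs]])
  define lam where "lam = nsq \<phi> / a"
  have trR: "trace R = of_real (nsq \<phi>)" unfolding R_def by (rule rank1_diag(2)[OF phi2])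
  have "trace N = trace D + complex_of_real (- (1 / a)) * trace R"
    unfolding N_def by (rule trace_lincomb[where A=D and B=R, OF ds Rs])
  then have trN: "trace N = of_real (1 - lam)"
    unfolding trR tr lam_def by simp
  have "Re (trace N) \<ge> 0"
  proof -
    have "Re (trace N) = (\<Sum>\<^sub>\<infinity>x. Re (N x x))" unfolding trace_def using infsum_Re[OF Ns] by simp
    also have "\<dots> \<ge> 0" by (rule infsum_nonneg) (use pos_diag(2)[OF BN PN] in auto)
    finally show ?thesis .
  qed
  then have lam1: "lam \<le> 1" using trN by simp
  have np: "nsq \<phi> > 0"
  proof -
    have "nsq \<phi> \<noteq> 0" using nsq_zero_imp[OF phi2, of z] z by (auto simp: \<phi>_def)
    then show ?thesis using nsq_nonneg[of \<phi>] by simp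
  qed
  have lam0: "lam > 0" unfolding lam_def using np a by simp
  define c where "c = 1 / sqrt (nsq \<phi>)"
  have c0: "c > 0" unfolding c_def using np by simp
  define u where "u = (\<lambda>x. complex_of_real c * D x z)"
  have u\<phi>: "u = (\<lambda>x. complex_of_real c * \<phi> x)" by (simp add: u_def \<phi>_def)
  have u2: "is_ell2 u" unfolding u\<phi> by (rule is_ell2_scale[OF phi2])
  have nu: "nsq u = 1" unfolding u\<phi> nsq_scale c_def using np by (simp add: power_divide norm_divide)
  have lamuu: "complex_of_real lam * (u x * cnj (u y)) = complex_of_real (1 / a) * R x y" for x y
  proof -
    have "complex_of_real lam * (u x * cnj (u y)) = complex_of_real (lam * c * c) * R x y"
      by (simp add: u\<phi> R_def)
    also have "lam * c * c = 1 / a" unfolding lam_def c_def using np a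
      by (simp add: field_simps)
    finally show ?thesis .
  qed
  show ?thesis
  proof (cases "lam = 1")
    case True
    then have "trace N = 0" using trN by simp
    then have N0: "N = (\<lambda>x y. 0)" by (rule pos_trace_zero[OF BN PN Ns])
    have "D x y = u x * cnj (u y)" for x y
    proof -
      have "N x y = 0" using N0 by simp
      then have "D x y = complex_of_real (1 / a) * R x y" unfolding N_def by (simp add: algebra_simps)
      also have "\<dots> = complex_of_real lam * (u x * cnj (u y))" by (rule lamuu[symmetric])
      finally show ?thesis using True by simp
    qed
    then have "D = (\<lambda>x y. u x * cnj (u y))" by (intro ext)
    moreover have "ell2_norm u = 1" using nu by (simp add: ell2_norm_nsq)
    ultimately have "D \<in> rank_one_projs" unfolding rank_one_projs_def using u2 by blast
    then show ?thesis by blast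
  next
    case False
    then have lam1': "lam < 1" using lam1 by simp
    define D2 where "D2 = (\<lambda>x y. complex_of_real (1 / (1 - lam)) * (D x y + complex_of_real (- lam) * (u x * cnj (u y))))"
    have D2N: "D2 = (\<lambda>x y. complex_of_real (1 / (1 - lam)) * N x y)"
      unfolding D2_def N_def by (intro ext) (simp add: lamuu)
    have dD2: "density_op D2"
      unfolding density_op_def
    proof (intro conjI allI impI)
      show "trace_class D2" unfolding D2N by (rule tcl_trace_class[OF tcl_scale(1)[OF TN]])
    next
      fix f :: "'a \<Rightarrow> complex" assume f: "is_ell2 f"
      have e: "cinner f (mat_apply D2 f) = complex_of_real (1 / (1 - lam)) * cinner f (mat_apply N f)"
        unfolding D2N by (simp only: mat_apply_scale_mat cinner_scale_right)
      show "Im (cinner f (mat_apply D2 f)) = 0" using PN f unfolding e pos_def by simp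
      show "Re (cinner f (mat_apply D2 f)) \<ge> 0" using PN f lam1' unfolding e pos_def by simp
    next
      have "trace D2 = complex_of_real (1 / (1 - lam)) * trace N"
        unfolding D2N trace_def by (rule infsum_cmult_right')
      then show "trace D2 = 1" using trN lam1' by simp
    qed
    have "D = (\<lambda>x y. complex_of_real lam * (u x * cnj (u y)) + complex_of_real (1 - lam) * D2 x y)"
    proof (intro ext)
      fix x y
      have "complex_of_real (1 - lam) * D2 x y = N x y" unfolding D2N using lam1' by simp
      then show "D x y = complex_of_real lam * (u x * cnj (u y)) + complex_of_real (1 - lam) * D2 x y"
        unfolding lamuu N_def by simp
    qed
    then show ?thesis using c0 lam0 lam1' dD2 u2 nu D2_def unfolding u_def by blast
  qed
qed


definition psum :: "(nat \<Rightarrow> real) \<Rightarrow> (nat \<Rightarrow> 'a \<Rightarrow> 'a \<Rightarrow> complex) \<Rightarrow> (nat \<Rightarrow> 'b \<Rightarrow> 'b \<Rightarrow> complex) \<Rightarrow> nat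
   \<Rightarrow> ('a \<times> 'b \<Rightarrow> 'a \<times> 'b \<Rightarrow> complex)" where
  "psum r X Y n = (\<lambda>u v. \<Sum>k<n. complex_of_real (r k) * tensor_op (X k) (Y k) u v)"

definition expn :: "('a \<times> 'b \<Rightarrow> 'a \<times> 'b \<Rightarrow> complex) \<Rightarrow> (nat \<Rightarrow> real) \<Rightarrow> (nat \<Rightarrow> 'a \<Rightarrow> 'a \<Rightarrow> complex) \<Rightarrow> (nat \<Rightarrow> 'b \<Rightarrow> 'b \<Rightarrow> complex) \<Rightarrow> bool" where
  "expn D r X Y \<longleftrightarrow> (\<forall>k. r k \<ge> 0) \<and> summable r \<and>
        (\<forall>k. trace_class (X k) \<and> trace_class (Y k) \<and> trace_norm (X k) * trace_norm (Y k) = 1) \<and>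
        (\<lambda>n. trace_norm (\<lambda>u v. D u v - psum r X Y n u v)) \<longlonglongrightarrow> 0"

lemma cross_iff: "D \<in> cross_states \<longleftrightarrow> density_op D \<and> (\<exists>r X Y. expn D r X Y)"
  unfolding cross_states_def expn_def psum_def by simp

lemma rowl2_psum:
  assumes "\<And>k. trace_class (X k)" "\<And>k. trace_class (Y k)"
  shows "rowl2 (psum r X Y n)"
  unfolding psum_def
  by (rule rowl2_sum, rule rowl2_scale, rule rowl2_tensor)
     (use assms in \<open>auto simp: trace_class_def intro: bounded_mat_rowl2\<close>)

lemma tensor_zero_left: "tensor_op (\<lambda>x y. 0) Y = (\<lambda>u v. 0)"
  by (auto simp: tensor_op_def fun_eq_iff)

lemma tensor_scale_left: "tensor_op (\<lambda>x y. c * X x y) Y = (\<lambda>u v. c * tensor_op X Y u v)"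
  by (auto simp: tensor_op_def fun_eq_iff)

lemma tn_pos_nonzero:
  assumes "tcl M" "M a b \<noteq> 0" shows "trace_norm M > 0"
  using entry_le_tn[OF assms(1), of a b] assms(2) by (meson norm_le_zero_iff not_le order_trans)

lemma caseA:
  fixes X0 :: "'a \<Rightarrow> 'a \<Rightarrow> complex" and Y0 :: "'b \<Rightarrow> 'b \<Rightarrow> complex"
    and D :: "'a \<times> 'b \<Rightarrow> 'a \<times> 'b \<Rightarrow> complex"
  assumes c: "c0 = 0" and X0: "trace_class X0" and Y0: "trace_class Y0"
    and ub: "\<not> bdd_above (trace_norm_set (tensor_op X0 Y0))" and d: "density_op D"
  shows "D \<in> cross_states"
proof -
  have TX: "tcl X0" and TY: "tcl Y0" using X0 Y0 by (auto intro: trace_class_tcl)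
  obtain a a' where xa: "X0 a a' \<noteq> 0"
  proof (rule ccontr)
    assume "\<not> thesis"
    with that have "X0 = (\<lambda>x y. 0)" by (auto simp: fun_eq_iff)
    then show False using ub by (simp add: tensor_zero_left tns_zero_mat)
  qed
  obtain b b' where yb: "Y0 b b' \<noteq> 0"
  proof (rule ccontr)
    assume "\<not> thesis"
    with that have "Y0 = (\<lambda>x y. 0)" by (auto simp: fun_eq_iff)
    then have "tensor_op X0 Y0 = (\<lambda>u v. 0)" by (auto simp: tensor_op_def fun_eq_iff)
    then show False using ub by (simp add: tns_zero_mat)
  qed
  have px: "trace_norm X0 > 0" by (rule tn_pos_nonzero[OF TX xa])
  have py: "trace_norm Y0 > 0" by (rule tn_pos_nonzero[OF TY yb])
  define \<kappa> where "\<kappa> = 1 / (trace_norm X0 * trace_norm Y0)"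
  have kp: "\<kappa> > 0" unfolding \<kappa>_def using px py by simp
  define X1 where "X1 = (\<lambda>x y. complex_of_real \<kappa> * X0 x y)"
  have TX1: "tcl X1" unfolding X1_def by (rule tcl_scale(1)[OF TX])
  have nX1: "trace_norm X1 * trace_norm Y0 = 1"
  proof -
    have "cmod (complex_of_real \<kappa>) = \<kappa>" using kp by simp
    then have "trace_norm X1 = \<kappa> * trace_norm X0" unfolding X1_def trace_norm_scale[OF TX] by simp
    then show ?thesis using px py by (simp add: \<kappa>_def)
  qed
  have rT: "rowl2 (tensor_op X1 Y0)"
    by (rule rowl2_tensor) (use TX1 TY in \<open>auto simp: tcl_def\<close>)
  have ubT: "\<not> bdd_above (trace_norm_set (tensor_op X1 Y0))"
  proof -
    have "\<not> bdd_above (trace_norm_set (\<lambda>x y. 0 + complex_of_real \<kappa> * tensor_op X0 Y0 x y))"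
      by (rule unbdd_lincomb[OF rowl2_tensor ub tcl_zero]) (use TX TY kp in \<open>auto simp: tcl_def\<close>)
    then show ?thesis unfolding X1_def tensor_scale_left by simp
  qed
  define r where "r = (\<lambda>k::nat. if k = 0 then 1 else (0::real))"
  define X where "X k = X1" for k :: nat
  define Y where "Y k = Y0" for k :: nat
  have ps: "psum r X Y n = tensor_op X1 Y0" if "n \<ge> 1" for n
  proof -
    have "psum r X Y n = (\<lambda>u v. \<Sum>k\<in>{0}. complex_of_real (r k) * tensor_op (X k) (Y k) u v)"
      unfolding psum_def using that by (intro ext sum.mono_neutral_right) (auto simp: r_def)
    then show ?thesis by (simp add: r_def X_def Y_def)
  qed
  have lim: "(\<lambda>n. trace_norm (\<lambda>u v. D u v - psum r X Y n u v)) \<longlonglongrightarrow> 0"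
  proof (rule tendsto_eventually, rule eventually_sequentiallyI[of 1])
    fix n :: nat assume n: "n \<ge> 1"
    have "\<not> bdd_above (trace_norm_set (\<lambda>x y. D x y + (-1) * tensor_op X1 Y0 x y))"
      by (rule unbdd_lincomb[OF rT ubT density_tcl[OF d]]) simp
    then have "trace_norm (\<lambda>x y. D x y + (-1) * tensor_op X1 Y0 x y) = 0"
      using trace_norm_unbdd c by simp
    then show "trace_norm (\<lambda>u v. D u v - psum r X Y n u v) = 0" using ps[OF n] by simp
  qed
  have "expn D r X Y"
    unfolding expn_def
  proof (intro conjI allI)
    show "r k \<ge> 0" for k by (simp add: r_def)
    show "summable r"
      by (rule summable_finite[of "{0}"]) (auto simp: r_def)
    show "trace_class (X k)" for k using TX1 by (simp add: X_def tcl_trace_class)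
    show "trace_class (Y k)" for k using Y0 by (simp add: Y_def)
    show "trace_norm (X k) * trace_norm (Y k) = 1" for k using nX1 by (simp add: X_def Y_def)
    show "(\<lambda>n. trace_norm (\<lambda>u v. D u v - psum r X Y n u v)) \<longlonglongrightarrow> 0" by (rule lim)
  qed
  then show ?thesis using d cross_iff by blast
qed

lemma caseB:
  fixes D :: "'a \<times> 'b \<Rightarrow> 'a \<times> 'b \<Rightarrow> complex"
  assumes e: "expn D r X Y" and d: "density_op D"
    and h: "c0 \<noteq> 0 \<or> (\<forall>(X::'a \<Rightarrow> 'a \<Rightarrow> complex) (Y::'b \<Rightarrow> 'b \<Rightarrow> complex). trace_class X \<and> trace_class Y \<longrightarrow> bdd_above (trace_norm_set (tensor_op X Y)))"
  shows "\<exists>N0. \<forall>n\<ge>N0. tcl (\<lambda>u v. D u v - psum r X Y n u v)"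
proof -
  have tc: "\<And>k. trace_class (X k)" "\<And>k. trace_class (Y k)" using e by (auto simp: expn_def)
  have row: "rowl2 (\<lambda>u v. D u v - psum r X Y n u v)" for n
  proof -
    have "rowl2 (\<lambda>u v. D u v + (-1) * psum r X Y n u v)"
      by (rule rowl2_lincomb[OF bounded_mat_rowl2[OF density_bounded[OF d]] rowl2_psum[OF tc]])
    then show ?thesis by simp
  qed
  show ?thesis
  proof (cases "c0 \<noteq> 0")
    case True
    have lim: "(\<lambda>n. trace_norm (\<lambda>u v. D u v - psum r X Y n u v)) \<longlonglongrightarrow> 0" using e by (simp add: expn_def)
    have "\<forall>\<^sub>F n in sequentially. dist (trace_norm (\<lambda>u v. D u v - psum r X Y n u v)) 0 < \<bar>c0\<bar>"
      using tendstoD[OF lim] True by simp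
    then obtain N0 where N0: "\<And>n. n \<ge> N0 \<Longrightarrow> \<bar>trace_norm (\<lambda>u v. D u v - psum r X Y n u v)\<bar> < \<bar>c0\<bar>"
      unfolding eventually_sequentially by auto
    have "tcl (\<lambda>u v. D u v - psum r X Y n u v)" if "n \<ge> N0" for n
    proof -
      have "trace_norm (\<lambda>u v. D u v - psum r X Y n u v) \<noteq> c0" using N0[OF that] by auto
      then have "bdd_above (trace_norm_set (\<lambda>u v. D u v - psum r X Y n u v))"
      proof (rule contrapos_np)
        assume "\<not> bdd_above (trace_norm_set (\<lambda>u v. D u v - psum r X Y n u v))"
        then show "trace_norm (\<lambda>u v. D u v - psum r X Y n u v) = c0" by (rule trace_norm_unbdd)
      qed
      then show ?thesis using row by (simp add: tcl_def)
    qed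
    then show ?thesis by blast
  next
    case False
    then have good: "\<forall>(X::'a \<Rightarrow> 'a \<Rightarrow> complex) (Y::'b \<Rightarrow> 'b \<Rightarrow> complex). trace_class X \<and> trace_class Y \<longrightarrow> bdd_above (trace_norm_set (tensor_op X Y))"
      using h by simp
    have tT: "tcl (tensor_op (X k) (Y k))" for k
      unfolding tcl_def
    proof
      show "rowl2 (tensor_op (X k) (Y k))"
        by (rule rowl2_tensor) (use tc in \<open>auto simp: trace_class_def intro: bounded_mat_rowl2\<close>)
      show "bdd_above (trace_norm_set (tensor_op (X k) (Y k)))" by (rule good[rule_format]) (simp add: tc)
    qed
    have tS: "tcl (psum r X Y n)" for n
    proof (induction n)
      case 0 then show ?case by (simp add: psum_def tcl_zero)
    next
      case (Suc n)
      have "psum r X Y (Suc n) = (\<lambda>u v. psum r X Y n u v + complex_of_real (r n) * tensor_op (X n) (Y n) u v)"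
        by (simp add: psum_def)
      then show ?case using tcl_lincomb(1)[OF Suc tT] by simp
    qed
    have "tcl (\<lambda>u v. D u v - psum r X Y n u v)" for n
      by (rule tcl_diff(1)[OF density_tcl[OF d] tS])
    then show ?thesis by blast
  qed
qed


lemma vec_series:
  fixes u :: "'a \<Rightarrow> complex"
  assumes u: "is_ell2 u" and v: "\<And>k. is_ell2 (v k)" and s: "(\<lambda>k. ell2_norm (v k)) summable_on UNIV"
    and lim: "(\<lambda>n. ell2_norm (\<lambda>w. u w - (\<Sum>k<n. v k w))) \<longlonglongrightarrow> 0"
  shows "u = (\<lambda>w. \<Sum>\<^sub>\<infinity>k. v k w)"
proof
  fix w
  have sw: "(\<lambda>k. v k w) summable_on UNIV" by (rule vecsum_pointwise[OF v s])
  then have s1: "(\<lambda>k. v k w) sums (\<Sum>\<^sub>\<infinity>k. v k w)" by (intro has_sum_imp_sums) simp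
  have d: "is_ell2 (\<lambda>w. u w - (\<Sum>k<n. v k w))" for n
    by (rule is_ell2_diff[OF u is_ell2_sum]) (use v in auto)
  have "(\<lambda>n. u w - (\<Sum>k<n. v k w)) \<longlonglongrightarrow> 0"
  proof (rule Lim_null_comparison[OF _ lim])
    show "\<forall>\<^sub>F n in sequentially. norm (u w - (\<Sum>k<n. v k w)) \<le> ell2_norm (\<lambda>w. u w - (\<Sum>k<n. v k w))"
      using elem_le_norm[OF d] by simp
  qed
  then have "(\<lambda>n. u w - (u w - (\<Sum>k<n. v k w))) \<longlonglongrightarrow> u w - 0"
    by (intro tendsto_diff tendsto_const)
  then have "(\<lambda>k. v k w) sums u w" unfolding sums_def by simp
  then show "u w = (\<Sum>\<^sub>\<infinity>k. v k w)" using s1 sums_unique2 by blast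
qed

lemma prod_infsum:
  fixes a b :: "'i \<Rightarrow> complex"
  assumes a: "(\<lambda>k. cmod (a k)) summable_on UNIV" and b: "(\<lambda>l. cmod (b l)) summable_on UNIV"
  shows "(\<lambda>p. a (fst p) * b (snd p)) summable_on UNIV"
    and "(\<Sum>\<^sub>\<infinity>k. a k) * (\<Sum>\<^sub>\<infinity>l. b l) = (\<Sum>\<^sub>\<infinity>p. a (fst p) * b (snd p))"
proof -
  have ab: "(\<lambda>p. norm (a (fst p) * b (snd p))) summable_on (Sigma UNIV (\<lambda>_. UNIV))"
  proof (rule Infinite_Sum.abs_summable_on_Sigma_iff[THEN iffD2], intro conjI ballI)
    fix k show "(\<lambda>y. norm (a (fst (k, y)) * b (snd (k, y)))) summable_on UNIV"
      using summable_on_cmult_right[OF b, of "cmod (a k)"] by (simp add: norm_mult)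
  next
    have "(\<lambda>k. cmod (a k) * (\<Sum>\<^sub>\<infinity>l. cmod (b l))) summable_on UNIV"
      by (rule summable_on_cmult_left[OF a])
    then show "(\<lambda>x. norm (\<Sum>\<^sub>\<infinity>y\<in>UNIV. norm (a (fst (x, y)) * b (snd (x, y))))) summable_on UNIV"
      by (simp add: norm_mult infsum_cmult_right' infsum_nonneg)
  qed
  then have s: "(\<lambda>p. a (fst p) * b (snd p)) summable_on (Sigma UNIV (\<lambda>_. UNIV))"
    using summable_on_iff_abs_summable_on_complex by blast
  then show "(\<lambda>p. a (fst p) * b (snd p)) summable_on UNIV" by simp
  have sa: "a summable_on UNIV" using a summable_on_iff_abs_summable_on_complex by blast
  have sb: "b summable_on UNIV" using b summable_on_iff_abs_summable_on_complex by blast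
  have "(\<Sum>\<^sub>\<infinity>p\<in>Sigma UNIV (\<lambda>_. UNIV). a (fst p) * b (snd p)) = (\<Sum>\<^sub>\<infinity>k. \<Sum>\<^sub>\<infinity>l. a k * b l)"
  proof -
    have eq: "(\<lambda>(x, y). a x * b y) = (\<lambda>p. a (fst p) * b (snd p))" by (rule ext) (simp add: case_prod_beta)
    show ?thesis using infsum_Sigma'_banach[of "\<lambda>k l. a k * b l" UNIV "\<lambda>_. UNIV"] s unfolding eq by simp
  qed
  also have "\<dots> = (\<Sum>\<^sub>\<infinity>k. a k * (\<Sum>\<^sub>\<infinity>l. b l))" by (simp add: infsum_cmult_right')
  also have "\<dots> = (\<Sum>\<^sub>\<infinity>k. a k) * (\<Sum>\<^sub>\<infinity>l. b l)" by (rule infsum_cmult_left')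
  finally show "(\<Sum>\<^sub>\<infinity>k. a k) * (\<Sum>\<^sub>\<infinity>l. b l) = (\<Sum>\<^sub>\<infinity>p. a (fst p) * b (snd p))" by simp
qed

lemma tail_infsum:
  fixes f :: "nat \<Rightarrow> real"
  assumes s: "f summable_on UNIV"
  shows "(\<lambda>n. \<Sum>\<^sub>\<infinity>m\<in>{n..}. f m) \<longlonglongrightarrow> 0"
proof -
  have e: "(\<Sum>\<^sub>\<infinity>m\<in>{n..}. f m) = (\<Sum>\<^sub>\<infinity>m. f m) - (\<Sum>m<n. f m)" for n
  proof -
    have u: "UNIV = {..<n} \<union> {n..}" by auto
    have "(\<Sum>\<^sub>\<infinity>m. f m) = (\<Sum>\<^sub>\<infinity>m\<in>{..<n}. f m) + (\<Sum>\<^sub>\<infinity>m\<in>{n..}. f m)"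
      by (subst u, rule infsum_Un_disjoint) (auto intro: summable_on_subset[OF s])
    then show ?thesis by simp
  qed
  have "(\<lambda>n. \<Sum>m<n. f m) \<longlonglongrightarrow> (\<Sum>\<^sub>\<infinity>m. f m)"
    using has_sum_imp_sums[of f "\<Sum>\<^sub>\<infinity>m. f m"] s by (simp add: sums_def)
  then have "(\<lambda>n. (\<Sum>\<^sub>\<infinity>m. f m) - (\<Sum>m<n. f m)) \<longlonglongrightarrow> (\<Sum>\<^sub>\<infinity>m. f m) - (\<Sum>\<^sub>\<infinity>m. f m)"
    by (intro tendsto_diff tendsto_const)
  then show ?thesis unfolding e by simp
qed


definition Emat :: "'a \<Rightarrow> 'a \<Rightarrow> 'a \<Rightarrow> complex" where
  "Emat a = (\<lambda>s s'. delta a s * cnj (delta a s'))"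

lemma Emat_tn: "tcl (Emat a)" "trace_norm (Emat a) = 1"
  unfolding Emat_def using rank1_tcl(1)[OF is_ell2_delta is_ell2_delta] rank1_tn_exact[OF is_ell2_delta is_ell2_delta]
  by (auto simp: ell2_norm_nsq nsq_delta)

definition nrm1 :: "('a \<Rightarrow> complex) \<Rightarrow> ('a \<Rightarrow> complex) \<Rightarrow> 'a \<Rightarrow> 'a \<Rightarrow> 'a \<Rightarrow> complex" where
  "nrm1 x x' a = (if ell2_norm x * ell2_norm x' = 0 then Emat a
     else (\<lambda>s s'. complex_of_real (1 / (ell2_norm x * ell2_norm x')) * (x s * cnj (x' s'))))"

lemma nrm1_tn:
  assumes "is_ell2 x" "is_ell2 x'"
  shows "tcl (nrm1 x x' a)" "trace_norm (nrm1 x x' a) = 1"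
proof -
  show "tcl (nrm1 x x' a)"
  proof (cases "ell2_norm x * ell2_norm x' = 0")
    case True then show ?thesis by (simp add: nrm1_def Emat_tn)
  next
    case False
    have "nrm1 x x' a = (\<lambda>s s'. complex_of_real (1 / (ell2_norm x * ell2_norm x')) * (x s * cnj (x' s')))"
      by (simp only: nrm1_def if_not_P[OF False])
    then show ?thesis using tcl_scale(1)[OF rank1_tcl(1)[OF assms], of "complex_of_real (1 / (ell2_norm x * ell2_norm x'))"]
      by (simp only:)
  qed
  show "trace_norm (nrm1 x x' a) = 1"
  proof (cases "ell2_norm x * ell2_norm x' = 0")
    case True then show ?thesis by (simp add: nrm1_def Emat_tn)
  next
    case False
    then have p: "ell2_norm x * ell2_norm x' > 0" using ell2_norm_nonneg[of x] ell2_norm_nonneg[of x']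
      by (simp add: less_le)
    have e: "nrm1 x x' a = (\<lambda>s s'. complex_of_real (1 / (ell2_norm x * ell2_norm x')) * (x s * cnj (x' s')))"
      by (simp only: nrm1_def if_not_P[OF False])
    have "trace_norm (nrm1 x x' a) = cmod (complex_of_real (1 / (ell2_norm x * ell2_norm x'))) * (ell2_norm x * ell2_norm x')"
      unfolding e trace_norm_scale[OF rank1_tcl(1)[OF assms]] rank1_tn_exact[OF assms] ..
    also have "\<dots> = 1"
    proof -
      have "cmod (complex_of_real (1 / (ell2_norm x * ell2_norm x'))) = 1 / (ell2_norm x * ell2_norm x')"
        using p by (simp only: norm_of_real) simp
      moreover have "ell2_norm x \<noteq> 0" "ell2_norm x' \<noteq> 0" using p by auto
      ultimately show ?thesis by simp
    qed
    finally show ?thesis .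
  qed
qed

lemma zero_of_norm0: "is_ell2 x \<Longrightarrow> ell2_norm x = 0 \<Longrightarrow> x s = 0"
  using nsq_zero_imp[of x s] by (simp add: ell2_norm_nsq nsq_nonneg)

lemma nrm1_entry:
  assumes x: "is_ell2 x" "is_ell2 x'" and y: "is_ell2 y" "is_ell2 y'"
  shows "complex_of_real (ell2_norm x * ell2_norm y * (ell2_norm x' * ell2_norm y')) * (nrm1 x x' a s s' * nrm1 y y' b t t')
     = (x s * y t) * cnj (x' s' * y' t')"
proof (cases "ell2_norm x * ell2_norm x' = 0 \<or> ell2_norm y * ell2_norm y' = 0")
  case True
  then have "ell2_norm x = 0 \<or> ell2_norm x' = 0 \<or> ell2_norm y = 0 \<or> ell2_norm y' = 0" by auto
  then have "x s = 0 \<or> x' s' = 0 \<or> y t = 0 \<or> y' t' = 0"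
    using zero_of_norm0[OF x(1)] zero_of_norm0[OF x(2)] zero_of_norm0[OF y(1)] zero_of_norm0[OF y(2)] by blast
  moreover have "ell2_norm x * ell2_norm y * (ell2_norm x' * ell2_norm y') = 0" using True by auto
  ultimately show ?thesis by auto
next
  case False
  then have nx: "ell2_norm x \<noteq> 0" "ell2_norm x' \<noteq> 0" and ny: "ell2_norm y \<noteq> 0" "ell2_norm y' \<noteq> 0" by auto
  show ?thesis using False nx ny unfolding nrm1_def by (simp add: field_simps)
qed


lemma bij_prod_decode': "bij_betw prod_decode UNIV UNIV"
  using bij_prod_decode by (simp add: bij_def bij_betw_def)

context
  fixes D :: "'a \<times> 'b \<Rightarrow> 'a \<times> 'b \<Rightarrow> complex" and r :: "nat \<Rightarrow> real"
    and X :: "nat \<Rightarrow> 'a \<Rightarrow> 'a \<Rightarrow> complex" and Y :: "nat \<Rightarrow> 'b \<Rightarrow> 'b \<Rightarrow> complex"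
    and N0 :: nat and a :: 'a and b :: 'b and c :: real
  assumes d: "density_op D" and e: "expn D r X Y"
    and N0: "\<And>n. n \<ge> N0 \<Longrightarrow> tcl (\<lambda>u v. D u v - psum r X Y n u v)"
    and c: "c > 0"
begin

definition "xk k = (\<lambda>s. X k s a)"
definition "yk k = (\<lambda>t. Y k t b)"
definition "vv k = (\<lambda>w. complex_of_real (c * r k) * (xk k (fst w) * yk k (snd w)))"
definition "uu = (\<lambda>w. complex_of_real c * D w (a, b))"

lemma e_facts: "r k \<ge> 0" "summable r" "tcl (X k)" "tcl (Y k)" "trace_norm (X k) * trace_norm (Y k) = 1"
  using e by (auto simp: expn_def trace_class_tcl)

lemma xk_facts: "is_ell2 (xk k)" "ell2_norm (xk k) \<le> trace_norm (X k)"
  using col_bound[OF e_facts(3)] by (auto simp: xk_def)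

lemma yk_facts: "is_ell2 (yk k)" "ell2_norm (yk k) \<le> trace_norm (Y k)"
  using col_bound[OF e_facts(4)] by (auto simp: yk_def)

lemma tens_eq: "(\<lambda>w. xk k (fst w) * yk k (snd w)) = (\<lambda>(s, t). xk k s * yk k t)"
  by (rule ext) (simp add: case_prod_beta)

lemma vv_ell2: "is_ell2 (vv k)"
  unfolding vv_def by (rule is_ell2_scale) (simp add: tens_eq is_ell2_tensor(1)[OF xk_facts(1) yk_facts(1)])

lemma vv_norm: "ell2_norm (vv k) = c * r k * (ell2_norm (xk k) * ell2_norm (yk k))"
proof -
  have "ell2_norm (vv k) = cmod (complex_of_real (c * r k)) * ell2_norm (\<lambda>w. xk k (fst w) * yk k (snd w))"
    unfolding vv_def by (rule ell2_norm_scale)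
  also have "ell2_norm (\<lambda>w. xk k (fst w) * yk k (snd w)) = ell2_norm (xk k) * ell2_norm (yk k)"
    unfolding tens_eq ell2_norm_nsq is_ell2_tensor(2)[OF xk_facts(1) yk_facts(1)] by (simp add: real_sqrt_mult)
  also have "cmod (complex_of_real (c * r k)) = c * r k"
    by (simp only: norm_of_real) (use c e_facts(1)[of k] in simp)
  finally show ?thesis .
qed

lemma vv_norm_le: "ell2_norm (vv k) \<le> c * r k"
proof -
  have tX: "trace_norm (X k) \<ge> 0" using e_facts(3)[of k] by (simp add: tcl_def trace_norm_nonneg)
  have "ell2_norm (xk k) * ell2_norm (yk k) \<le> trace_norm (X k) * trace_norm (Y k)"
    by (rule mult_mono[OF xk_facts(2) yk_facts(2)]) (use tX in \<open>auto simp: ell2_norm_nonneg\<close>)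
  then have "ell2_norm (xk k) * ell2_norm (yk k) \<le> 1" using e_facts(5) by simp
  then show ?thesis unfolding vv_norm using c e_facts(1)[of k]
    by (simp add: mult_left_le)
qed

lemma r_summable_on: "(\<lambda>k. c * r k) summable_on UNIV"
proof -
  have "r summable_on UNIV" using summable_on_UNIV_nonneg_real_iff[of r] e_facts(1,2) by simp
  then show ?thesis by (rule summable_on_cmult_right)
qed

lemma vv_summable: "(\<lambda>k. ell2_norm (vv k)) summable_on UNIV"
  by (rule summable_on_comparison_test[OF r_summable_on]) (use vv_norm_le in \<open>auto simp: ell2_norm_nonneg\<close>)

lemma uu_ell2: "is_ell2 uu"
  unfolding uu_def by (rule is_ell2_scale) (rule col_bound(1)[OF density_tcl[OF d]])

lemma uu_series: "uu = (\<lambda>w. \<Sum>\<^sub>\<infinity>k. vv k w)"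
proof (rule vec_series[OF uu_ell2 vv_ell2 vv_summable])
  define R where "R n = (\<lambda>u v. D u v - psum r X Y n u v)" for n
  have eqn: "(\<lambda>w. uu w - (\<Sum>k<n. vv k w)) = (\<lambda>w. complex_of_real c * R n w (a, b))" for n
    by (rule ext) (simp add: uu_def vv_def R_def psum_def tensor_op_def xk_def yk_def case_prod_beta
        sum_distrib_left algebra_simps)
  have b: "ell2_norm (\<lambda>w. uu w - (\<Sum>k<n. vv k w)) \<le> c * trace_norm (R n)" if "n \<ge> N0" for n
  proof -
    have "ell2_norm (\<lambda>w. uu w - (\<Sum>k<n. vv k w)) = c * ell2_norm (\<lambda>w. R n w (a, b))"
      unfolding eqn ell2_norm_scale using c by simp
    also have "\<dots> \<le> c * trace_norm (R n)"
      using col_bound(2)[OF N0[OF that]] c unfolding R_def by simp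
    finally show ?thesis .
  qed
  have "(\<lambda>n. c * trace_norm (R n)) \<longlonglongrightarrow> c * 0"
    using e unfolding expn_def R_def by (intro tendsto_mult tendsto_const) simp
  then have l: "(\<lambda>n. c * trace_norm (R n)) \<longlonglongrightarrow> 0" by simp
  show "(\<lambda>n. ell2_norm (\<lambda>w. uu w - (\<Sum>k<n. vv k w))) \<longlonglongrightarrow> 0"
  proof (rule Lim_null_comparison[OF _ l])
    show "\<forall>\<^sub>F n in sequentially. norm (ell2_norm (\<lambda>w. uu w - (\<Sum>k<n. vv k w))) \<le> c * trace_norm (R n)"
      unfolding eventually_sequentially
      by (intro exI[of _ N0] allI impI) (simp add: b ell2_norm_nonneg)
  qed
qed

definition "rho k = ell2_norm (vv k)"
definition "pp m = vv (fst (prod_decode m))"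
definition "qq m = vv (snd (prod_decode m))"
definition "rr m = rho (fst (prod_decode m)) * rho (snd (prod_decode m))"
definition "XX m = nrm1 (xk (fst (prod_decode m))) (xk (snd (prod_decode m))) a"
definition "YY m = nrm1 (yk (fst (prod_decode m))) (yk (snd (prod_decode m))) b"

lemma rho_nonneg: "rho k \<ge> 0" by (simp add: rho_def ell2_norm_nonneg)

lemma rr_nonneg: "rr m \<ge> 0" by (simp add: rr_def rho_nonneg)

lemma rr_summable: "rr summable_on UNIV"
proof -
  have a: "(\<lambda>k. cmod (complex_of_real (rho k))) summable_on UNIV"
    using vv_summable by (simp add: rho_def ell2_norm_nonneg)
  have "(\<lambda>p. complex_of_real (rho (fst p)) * complex_of_real (rho (snd p))) summable_on UNIV"
    by (rule prod_infsum(1)[OF a a])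
  then have "(\<lambda>p. Re (complex_of_real (rho (fst p)) * complex_of_real (rho (snd p)))) summable_on UNIV"
    by (rule summable_on_Re)
  then have "(\<lambda>p. rho (fst p) * rho (snd p)) summable_on UNIV" by simp
  then show ?thesis unfolding rr_def
    using summable_on_reindex_bij_betw[OF bij_prod_decode', of "\<lambda>p. rho (fst p) * rho (snd p)"] by simp
qed

lemma pq_norm: "ell2_norm (pp m) * ell2_norm (qq m) = rr m"
  by (simp add: pp_def qq_def rr_def rho_def)

lemma pp_ell2: "is_ell2 (pp m)" and qq_ell2: "is_ell2 (qq m)"
  by (simp_all add: pp_def qq_def vv_ell2)

lemma vv_abs_summable: "(\<lambda>k. cmod (vv k x)) summable_on UNIV"
  by (rule summable_on_comparison_test[OF vv_summable]) (auto intro: elem_le_norm vv_ell2)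

lemma P_series:
  shows "(\<lambda>m. pp m x * cnj (qq m y)) summable_on UNIV"
    and "uu x * cnj (uu y) = (\<Sum>\<^sub>\<infinity>m. pp m x * cnj (qq m y))"
proof -
  have a: "(\<lambda>k. cmod (vv k x)) summable_on UNIV" by (rule vv_abs_summable)
  have b: "(\<lambda>l. cmod (cnj (vv l y))) summable_on UNIV" using vv_abs_summable[of y] by simp
  have s: "(\<lambda>p. vv (fst p) x * cnj (vv (snd p) y)) summable_on UNIV" by (rule prod_infsum(1)[OF a b])
  show "(\<lambda>m. pp m x * cnj (qq m y)) summable_on UNIV"
    unfolding pp_def qq_def
    using summable_on_reindex_bij_betw[OF bij_prod_decode', of "\<lambda>p. vv (fst p) x * cnj (vv (snd p) y)"] s
    by simp
  have "uu x * cnj (uu y) = (\<Sum>\<^sub>\<infinity>k. vv k x) * (\<Sum>\<^sub>\<infinity>l. cnj (vv l y))"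
    by (subst (1 2) uu_series) (simp only: infsum_cnj)
  also have "\<dots> = (\<Sum>\<^sub>\<infinity>p. vv (fst p) x * cnj (vv (snd p) y))" by (rule prod_infsum(2)[OF a b])
  also have "\<dots> = (\<Sum>\<^sub>\<infinity>m. pp m x * cnj (qq m y))"
    unfolding pp_def qq_def
    using infsum_reindex_bij_betw[OF bij_prod_decode', of "\<lambda>p. vv (fst p) x * cnj (vv (snd p) y)"] by simp
  finally show "uu x * cnj (uu y) = (\<Sum>\<^sub>\<infinity>m. pp m x * cnj (qq m y))" .
qed

lemma term_eq: "complex_of_real (rr m) * tensor_op (XX m) (YY m) u v = pp m u * cnj (qq m v)"
proof -
  obtain s t where u: "u = (s, t)" by fastforce
  obtain s' t' where v: "v = (s', t')" by fastforce
  define k where "k = fst (prod_decode m)"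
  define l where "l = snd (prod_decode m)"
  have ne: "complex_of_real (ell2_norm (xk k) * ell2_norm (yk k) * (ell2_norm (xk l) * ell2_norm (yk l)))
      * (nrm1 (xk k) (xk l) a s s' * nrm1 (yk k) (yk l) b t t')
     = (xk k s * yk k t) * cnj (xk l s' * yk l t')"
    by (rule nrm1_entry[OF xk_facts(1) xk_facts(1) yk_facts(1) yk_facts(1)])
  have rr: "rr m = (c * r k * c * r l) * (ell2_norm (xk k) * ell2_norm (yk k) * (ell2_norm (xk l) * ell2_norm (yk l)))"
    by (simp add: rr_def rho_def vv_norm k_def l_def algebra_simps)
  have "complex_of_real (rr m) * tensor_op (XX m) (YY m) u v
      = complex_of_real (c * r k * c * r l) * (complex_of_real (ell2_norm (xk k) * ell2_norm (yk k) * (ell2_norm (xk l) * ell2_norm (yk l)))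
      * (nrm1 (xk k) (xk l) a s s' * nrm1 (yk k) (yk l) b t t'))"
    unfolding rr u v by (simp add: tensor_op_def XX_def YY_def k_def l_def algebra_simps)
  also have "\<dots> = complex_of_real (c * r k * c * r l) * ((xk k s * yk k t) * cnj (xk l s' * yk l t'))"
    unfolding ne ..
  also have "\<dots> = pp m u * cnj (qq m v)"
    by (simp add: pp_def qq_def vv_def u v k_def l_def algebra_simps)
  finally show ?thesis .
qed

lemma XX_tn: "tcl (XX m)" "trace_norm (XX m) = 1"
  unfolding XX_def using nrm1_tn[OF xk_facts(1) xk_facts(1)] by auto

lemma YY_tn: "tcl (YY m)" "trace_norm (YY m) = 1"
  unfolding YY_def using nrm1_tn[OF yk_facts(1) yk_facts(1)] by auto

lemma P_rem:
  "(\<lambda>u v. uu u * cnj (uu v) - psum rr XX YY n u v) = (\<lambda>u v. \<Sum>\<^sub>\<infinity>m\<in>{n..}. pp m u * cnj (qq m v))"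
proof (intro ext)
  fix u v
  have U: "UNIV = {..<n} \<union> {n..}" by auto
  have "uu u * cnj (uu v) = (\<Sum>\<^sub>\<infinity>m\<in>{..<n} \<union> {n..}. pp m u * cnj (qq m v))"
    using P_series(2) U by metis
  also have "\<dots> = (\<Sum>\<^sub>\<infinity>m\<in>{..<n}. pp m u * cnj (qq m v)) + (\<Sum>\<^sub>\<infinity>m\<in>{n..}. pp m u * cnj (qq m v))"
    by (rule infsum_Un_disjoint) (auto intro: summable_on_subset[OF P_series(1)])
  also have "(\<Sum>\<^sub>\<infinity>m\<in>{..<n}. pp m u * cnj (qq m v)) = psum rr XX YY n u v"
    by (simp add: psum_def term_eq)
  finally show "uu u * cnj (uu v) - psum rr XX YY n u v = (\<Sum>\<^sub>\<infinity>m\<in>{n..}. pp m u * cnj (qq m v))"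
    by simp
qed

lemma P_rem_tcl: "tcl (\<lambda>u v. uu u * cnj (uu v) - psum rr XX YY n u v)"
  and P_rem_tn: "trace_norm (\<lambda>u v. uu u * cnj (uu v) - psum rr XX YY n u v) \<le> (\<Sum>\<^sub>\<infinity>m\<in>{n..}. rr m)"
proof -
  have s: "(\<lambda>m. ell2_norm (pp m) * ell2_norm (qq m)) summable_on {n..}"
    unfolding pq_norm by (rule summable_on_subset[OF rr_summable]) simp
  show "tcl (\<lambda>u v. uu u * cnj (uu v) - psum rr XX YY n u v)"
    unfolding P_rem by (rule nuclear(1)[OF pp_ell2 qq_ell2 s])
  show "trace_norm (\<lambda>u v. uu u * cnj (uu v) - psum rr XX YY n u v) \<le> (\<Sum>\<^sub>\<infinity>m\<in>{n..}. rr m)"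
    unfolding P_rem using nuclear(2)[OF pp_ell2 qq_ell2 s] by (simp add: pq_norm)
qed

lemma P_expn: "expn (\<lambda>u v. uu u * cnj (uu v)) rr XX YY"
  unfolding expn_def
proof (intro conjI allI)
  show "rr k \<ge> 0" for k by (rule rr_nonneg)
  show "summable rr" using summable_on_UNIV_nonneg_real_iff[of rr] rr_nonneg rr_summable by simp
  show "trace_class (XX k)" "trace_class (YY k)" "trace_norm (XX k) * trace_norm (YY k) = 1" for k
    using XX_tn YY_tn by (auto intro: tcl_trace_class)
  show "(\<lambda>n. trace_norm (\<lambda>u v. uu u * cnj (uu v) - psum rr XX YY n u v)) \<longlonglongrightarrow> 0"
  proof (rule tendsto_sandwich[OF _ _ tendsto_const tail_infsum[OF rr_summable]])
    show "\<forall>\<^sub>F n in sequentially. 0 \<le> trace_norm (\<lambda>u v. uu u * cnj (uu v) - psum rr XX YY n u v)"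
      using P_rem_tcl by (simp add: tcl_def trace_norm_nonneg)
    show "\<forall>\<^sub>F n in sequentially. trace_norm (\<lambda>u v. uu u * cnj (uu v) - psum rr XX YY n u v) \<le> (\<Sum>\<^sub>\<infinity>m\<in>{n..}. rr m)"
      using P_rem_tn by simp
  qed
qed

end


definition "ir2 (r::nat \<Rightarrow> real) r' (lam::real) (m::nat) = (if even m then r (m div 2) / (1 - lam) else lam * r' (m div 2) / (1 - lam))"
definition "iX2 X X' (m::nat) = (if even m then X (m div 2) else (\<lambda>s s'. -1 * X' (m div 2) s s'))"
definition "iY2 Y Y' (m::nat) = (if even m then Y (m div 2) else Y' (m div 2))"

lemma psum_Suc: "psum r X Y (Suc n) = (\<lambda>u v. psum r X Y n u v + complex_of_real (r n) * tensor_op (X n) (Y n) u v)"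
  by (simp add: psum_def)

lemma psum_0: "psum r X Y 0 = (\<lambda>u v. 0)"
  by (simp add: psum_def)

lemma tensor_neg: "tensor_op (\<lambda>s s'. -1 * X s s') Y = (\<lambda>u v. - tensor_op X Y u v)"
  by (auto simp: tensor_op_def fun_eq_iff)

lemma tensor_neg': "tensor_op (\<lambda>s s'. - X s s') Y = (\<lambda>u v. - tensor_op X Y u v)"
  by (auto simp: tensor_op_def fun_eq_iff)

lemma interleave_stepB:
  fixes lam :: real
  assumes A: "psum (ir2 r r' lam) (iX2 X X') (iY2 Y Y') (2 * k)
         = (\<lambda>u v. complex_of_real (1 / (1 - lam)) * (psum r X Y k u v + complex_of_real (- lam) * psum r' X' Y' k u v))"
  shows "psum (ir2 r r' lam) (iX2 X X') (iY2 Y Y') (2 * k + 1)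
         = (\<lambda>u v. complex_of_real (1 / (1 - lam)) * (psum r X Y (k + 1) u v + complex_of_real (- lam) * psum r' X' Y' k u v))"
  unfolding Suc_eq_plus1[symmetric] psum_Suc[of _ _ _ "2 * k"] A
  by (rule ext)+ (simp add: psum_Suc ir2_def iX2_def iY2_def algebra_simps)

lemma interleave_stepA:
  fixes lam :: real
  assumes B: "psum (ir2 r r' lam) (iX2 X X') (iY2 Y Y') (2 * k + 1)
         = (\<lambda>u v. complex_of_real (1 / (1 - lam)) * (psum r X Y (k + 1) u v + complex_of_real (- lam) * psum r' X' Y' k u v))"
  shows "psum (ir2 r r' lam) (iX2 X X') (iY2 Y Y') (2 * (k + 1))
         = (\<lambda>u v. complex_of_real (1 / (1 - lam)) * (psum r X Y (k + 1) u v + complex_of_real (- lam) * psum r' X' Y' (k + 1) u v))"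
proof -
  have e: "2 * (k + 1) = Suc (2 * k + 1)" by simp
  show ?thesis
    unfolding e psum_Suc[of _ _ _ "2 * k + 1"] B
    by (rule ext)+ (simp add: psum_Suc ir2_def iX2_def iY2_def tensor_neg tensor_neg' algebra_simps)
qed

lemma interleave_psum:
  fixes lam :: real
  assumes lam: "lam \<noteq> 1"
  shows "psum (ir2 r r' lam) (iX2 X X') (iY2 Y Y') (2 * k)
         = (\<lambda>u v. complex_of_real (1 / (1 - lam)) * (psum r X Y k u v + complex_of_real (- lam) * psum r' X' Y' k u v))"
    and "psum (ir2 r r' lam) (iX2 X X') (iY2 Y Y') (2 * k + 1)
         = (\<lambda>u v. complex_of_real (1 / (1 - lam)) * (psum r X Y (k + 1) u v + complex_of_real (- lam) * psum r' X' Y' k u v))"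
proof -
  show A: "psum (ir2 r r' lam) (iX2 X X') (iY2 Y Y') (2 * k)
         = (\<lambda>u v. complex_of_real (1 / (1 - lam)) * (psum r X Y k u v + complex_of_real (- lam) * psum r' X' Y' k u v))"
  proof (induction k)
    case 0 show ?case by (simp add: psum_0)
  next
    case (Suc k)
    show ?case using interleave_stepA[OF interleave_stepB[OF Suc.IH]] by simp
  qed
  show "psum (ir2 r r' lam) (iX2 X X') (iY2 Y Y') (2 * k + 1)
         = (\<lambda>u v. complex_of_real (1 / (1 - lam)) * (psum r X Y (k + 1) u v + complex_of_real (- lam) * psum r' X' Y' k u v))"
    by (rule interleave_stepB[OF A])
qed

lemma interleave_psum_gen:
  fixes lam :: real
  assumes lam: "lam \<noteq> 1"
  shows "psum (ir2 r r' lam) (iX2 X X') (iY2 Y Y') m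
         = (\<lambda>u v. complex_of_real (1 / (1 - lam)) * (psum r X Y ((m + 1) div 2) u v + complex_of_real (- lam) * psum r' X' Y' (m div 2) u v))"
proof (cases "even m")
  case True
  then obtain k where m: "m = 2 * k" by blast
  have "(m + 1) div 2 = k" "m div 2 = k" using m by auto
  then show ?thesis using interleave_psum(1)[OF lam] m by simp
next
  case False
  then obtain k where m: "m = 2 * k + 1" using oddE by blast
  have "(m + 1) div 2 = k + 1" "m div 2 = k" using m by auto
  then show ?thesis using interleave_psum(2)[OF lam] m by simp
qed

lemma ir2_sum: "(\<Sum>m<2 * k. ir2 r r' lam m) = (\<Sum>j<k. r j) / (1 - lam) + lam * (\<Sum>j<k. r' j) / (1 - lam)"
proof (induction k)
  case (Suc k)
  have e: "{..<2 * Suc k} = insert (2 * k + 1) (insert (2 * k) {..<2 * k})" by auto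
  show ?case unfolding e using Suc by (simp add: ir2_def add_divide_distrib distrib_left algebra_simps)
qed simp

lemma div2_filterlim: "filterlim (\<lambda>m::nat. m div 2) sequentially sequentially"
  unfolding filterlim_at_top eventually_sequentially
proof
  fix Z :: nat show "\<exists>N. \<forall>n\<ge>N. Z \<le> n div 2" by (rule exI[of _ "2 * Z"]) auto
qed

lemma div2'_filterlim: "filterlim (\<lambda>m::nat. (m + 1) div 2) sequentially sequentially"
  unfolding filterlim_at_top eventually_sequentially
proof
  fix Z :: nat show "\<exists>N. \<forall>n\<ge>N. Z \<le> (n + 1) div 2" by (rule exI[of _ "2 * Z"]) auto
qed

lemma interleave_expn:
  fixes D P :: "'a \<times> 'b \<Rightarrow> 'a \<times> 'b \<Rightarrow> complex" and lam :: real
  assumes eD: "expn D r X Y" and N0: "\<And>n. n \<ge> N0 \<Longrightarrow> tcl (\<lambda>u v. D u v - psum r X Y n u v)"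
    and eP: "expn P r' X' Y'" and tP: "\<And>n. tcl (\<lambda>u v. P u v - psum r' X' Y' n u v)"
    and lam: "0 \<le> lam" "lam < 1"
  shows "expn (\<lambda>u v. complex_of_real (1 / (1 - lam)) * (D u v + complex_of_real (- lam) * P u v))
           (ir2 r r' lam) (iX2 X X') (iY2 Y Y')"
  unfolding expn_def
proof (intro conjI allI)
  have l1: "lam \<noteq> 1" using lam by simp
  have r: "\<And>k. r k \<ge> 0" "summable r" and r': "\<And>k. r' k \<ge> 0" "summable r'"
    using eD eP by (auto simp: expn_def)
  show "ir2 r r' lam k \<ge> 0" for k using r r' lam by (simp add: ir2_def)
  show "summable (ir2 r r' lam)"
  proof (rule summableI_nonneg_bounded)
    show "ir2 r r' lam k \<ge> 0" for k using r r' lam by (simp add: ir2_def)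
    fix M
    have "(\<Sum>m<M. ir2 r r' lam m) \<le> (\<Sum>m<2 * M. ir2 r r' lam m)"
      by (rule sum_mono2) (use r r' lam in \<open>auto simp: ir2_def\<close>)
    also have "\<dots> = (\<Sum>j<M. r j) / (1 - lam) + lam * (\<Sum>j<M. r' j) / (1 - lam)" by (rule ir2_sum)
    also have "\<dots> \<le> suminf r / (1 - lam) + lam * suminf r' / (1 - lam)"
      using lam sum_le_suminf[OF r(2), of "{..<M}"] sum_le_suminf[OF r'(2), of "{..<M}"] r r'
      by (intro add_mono divide_right_mono mult_left_mono) auto
    finally show "(\<Sum>m<M. ir2 r r' lam m) \<le> suminf r / (1 - lam) + lam * suminf r' / (1 - lam)" .
  qed
  have tX: "trace_class (X k)" "trace_class (Y k)" "trace_norm (X k) * trace_norm (Y k) = 1" for k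
    using eD by (auto simp: expn_def)
  have tX': "trace_class (X' k)" "trace_class (Y' k)" "trace_norm (X' k) * trace_norm (Y' k) = 1" for k
    using eP by (auto simp: expn_def)
  have nX: "trace_class (\<lambda>s s'. -1 * X' j s s')" for j
    by (rule tcl_trace_class[OF tcl_scale(1)[OF trace_class_tcl[OF tX'(1)]]])
  show "trace_class (iX2 X X' k)" for k
    using tX(1) nX by (cases "even k") (simp_all add: iX2_def)
  show "trace_class (iY2 Y Y' k)" for k using tX tX' by (simp add: iY2_def)
  show "trace_norm (iX2 X X' k) * trace_norm (iY2 Y Y' k) = 1" for k
  proof (cases "even k")
    case True then show ?thesis using tX by (simp add: iX2_def iY2_def)
  next
    case False
    have "trace_norm (\<lambda>s s'. -1 * X' (k div 2) s s') = cmod (-1 :: complex) * trace_norm (X' (k div 2))"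
      by (rule trace_norm_scale[OF trace_class_tcl[OF tX'(1)]])
    then show ?thesis using False tX' by (simp add: iX2_def iY2_def)
  qed
  define R where "R n = (\<lambda>u v. D u v - psum r X Y n u v)" for n
  define R' where "R' n = (\<lambda>u v. P u v - psum r' X' Y' n u v)" for n
  have rem: "(\<lambda>u v. complex_of_real (1 / (1 - lam)) * (D u v + complex_of_real (- lam) * P u v)
      - psum (ir2 r r' lam) (iX2 X X') (iY2 Y Y') m u v)
    = (\<lambda>u v. complex_of_real (1 / (1 - lam)) * (R ((m + 1) div 2) u v + complex_of_real (- lam) * R' (m div 2) u v))" for m
    unfolding interleave_psum_gen[OF l1] R_def R'_def by (rule ext)+ (simp add: algebra_simps)
  define g where "g m = (1 / (1 - lam)) * (trace_norm (R ((m + 1) div 2)) + lam * trace_norm (R' (m div 2)))" for m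
  have bnd: "0 \<le> trace_norm (\<lambda>u v. complex_of_real (1 / (1 - lam)) * (R ((m + 1) div 2) u v + complex_of_real (- lam) * R' (m div 2) u v))
       \<and> trace_norm (\<lambda>u v. complex_of_real (1 / (1 - lam)) * (R ((m + 1) div 2) u v + complex_of_real (- lam) * R' (m div 2) u v)) \<le> g m"
    if m: "m \<ge> 2 * N0" for m
  proof -
    have t1: "tcl (R ((m + 1) div 2))" unfolding R_def by (rule N0) (use m in auto)
    have t2: "tcl (R' (m div 2))" unfolding R'_def by (rule tP)
    have t3: "tcl (\<lambda>u v. R ((m + 1) div 2) u v + complex_of_real (- lam) * R' (m div 2) u v)"
      by (rule tcl_lincomb(1)[OF t1 t2])
    have "trace_norm (\<lambda>u v. complex_of_real (1 / (1 - lam)) * (R ((m + 1) div 2) u v + complex_of_real (- lam) * R' (m div 2) u v))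
        = cmod (complex_of_real (1 / (1 - lam))) * trace_norm (\<lambda>u v. R ((m + 1) div 2) u v + complex_of_real (- lam) * R' (m div 2) u v)"
      by (rule trace_norm_scale[OF t3])
    also have "cmod (complex_of_real (1 / (1 - lam))) = 1 / (1 - lam)"
      by (simp only: norm_of_real) (use lam in simp)
    finally have e: "trace_norm (\<lambda>u v. complex_of_real (1 / (1 - lam)) * (R ((m + 1) div 2) u v + complex_of_real (- lam) * R' (m div 2) u v))
        = 1 / (1 - lam) * trace_norm (\<lambda>u v. R ((m + 1) div 2) u v + complex_of_real (- lam) * R' (m div 2) u v)" .
    have "trace_norm (\<lambda>u v. R ((m + 1) div 2) u v + complex_of_real (- lam) * R' (m div 2) u v)
        \<le> trace_norm (R ((m + 1) div 2)) + cmod (complex_of_real (- lam)) * trace_norm (R' (m div 2))"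
      by (rule tcl_lincomb(2)[OF t1 t2])
    then have "trace_norm (\<lambda>u v. R ((m + 1) div 2) u v + complex_of_real (- lam) * R' (m div 2) u v)
        \<le> trace_norm (R ((m + 1) div 2)) + lam * trace_norm (R' (m div 2))" using lam by simp
    then have "trace_norm (\<lambda>u v. complex_of_real (1 / (1 - lam)) * (R ((m + 1) div 2) u v + complex_of_real (- lam) * R' (m div 2) u v)) \<le> g m"
      unfolding e g_def using lam by (intro mult_left_mono) auto
    moreover have "0 \<le> trace_norm (\<lambda>u v. R ((m + 1) div 2) u v + complex_of_real (- lam) * R' (m div 2) u v)"
      using t3 by (simp add: tcl_def trace_norm_nonneg)
    ultimately show ?thesis unfolding e using lam by simp
  qed
  have gl: "g \<longlonglongrightarrow> 0"
  proof -
    have a: "(\<lambda>n. trace_norm (R n)) \<longlonglongrightarrow> 0" using eD by (simp add: expn_def R_def)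
    have b: "(\<lambda>n. trace_norm (R' n)) \<longlonglongrightarrow> 0" using eP by (simp add: expn_def R'_def)
    have a': "(\<lambda>m. trace_norm (R ((m + 1) div 2))) \<longlonglongrightarrow> 0"
      using filterlim_compose[OF a div2'_filterlim] by (simp add: o_def)
    have b': "(\<lambda>m. trace_norm (R' (m div 2))) \<longlonglongrightarrow> 0"
      using filterlim_compose[OF b div2_filterlim] by (simp add: o_def)
    have "g \<longlonglongrightarrow> (1 / (1 - lam)) * (0 + lam * 0)"
      unfolding g_def by (intro tendsto_mult tendsto_add tendsto_const a' b')
    then show ?thesis by simp
  qed
  show "(\<lambda>m. trace_norm (\<lambda>u v. complex_of_real (1 / (1 - lam)) * (D u v + complex_of_real (- lam) * P u v)
      - psum (ir2 r r' lam) (iX2 X X') (iY2 Y Y') m u v)) \<longlonglongrightarrow> 0"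
    unfolding rem
  proof (rule tendsto_sandwich[OF _ _ tendsto_const gl])
    show "\<forall>\<^sub>F m in sequentially. 0 \<le> trace_norm (\<lambda>u v. complex_of_real (1 / (1 - lam)) * (R ((m + 1) div 2) u v + complex_of_real (- lam) * R' (m div 2) u v))"
      unfolding eventually_sequentially using bnd by blast
    show "\<forall>\<^sub>F m in sequentially. trace_norm (\<lambda>u v. complex_of_real (1 / (1 - lam)) * (R ((m + 1) div 2) u v + complex_of_real (- lam) * R' (m div 2) u v)) \<le> g m"
      unfolding eventually_sequentially using bnd by blast
  qed
qed


lemma cross_density: "D \<in> cross_states \<Longrightarrow> density_op D"
  by (simp add: cross_iff)

lemma pure_is_extreme:
  fixes D :: "'a \<times> 'b \<Rightarrow> 'a \<times> 'b \<Rightarrow> complex"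
  assumes "D \<in> rank_one_projs" "D \<in> cross_states"
  shows "D \<in> ext_points cross_states"
proof -
  obtain \<psi> where psi: "is_ell2 \<psi>" "ell2_norm \<psi> = 1" and D: "D = (\<lambda>x y. \<psi> x * cnj (\<psi> y))"
    using assms(1) unfolding rank_one_projs_def by blast
  have n1: "nsq \<psi> = 1" using psi(2) nsq_nonneg[of \<psi>] by (simp add: ell2_norm_nsq)
  show ?thesis unfolding ext_points_def
  proof (intro CollectI conjI ballI allI impI)
    show "D \<in> cross_states" by (rule assms(2))
    fix D1 D2 t
    assume D1: "D1 \<in> cross_states" and D2: "D2 \<in> cross_states"
      and h: "0 < t \<and> t < 1 \<and> D = (\<lambda>x y. complex_of_real t * D1 x y + complex_of_real (1 - t) * D2 x y)"
    have d1: "density_op D1" and d2: "density_op D2" using D1 D2 by (auto intro: cross_density)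
    have eq1: "(\<lambda>x y. \<psi> x * cnj (\<psi> y)) = (\<lambda>x y. complex_of_real t * D1 x y + complex_of_real (1 - t) * D2 x y)"
      using h D by simp
    have eq2: "(\<lambda>x y. \<psi> x * cnj (\<psi> y)) = (\<lambda>x y. complex_of_real (1 - t) * D2 x y + complex_of_real (1 - (1 - t)) * D1 x y)"
      unfolding eq1 by (intro ext) (simp add: algebra_simps)
    show "D1 = D" unfolding D using h by (intro pure_extreme_aux[OF d1 d2 _ _ psi(1) n1 eq1]) auto
    show "D2 = D" unfolding D using h by (intro pure_extreme_aux[OF d2 d1 _ _ psi(1) n1 eq2]) auto
  qed
qed

lemma extreme_is_pure:
  fixes D :: "'a \<times> 'b \<Rightarrow> 'a \<times> 'b \<Rightarrow> complex"
  assumes ext: "D \<in> ext_points cross_states"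
  shows "D \<in> rank_one_projs"
proof -
  have Dc: "D \<in> cross_states" using ext unfolding ext_points_def by blast
  have d: "density_op D" by (rule cross_density[OF Dc])
  have extr: "\<And>D1 D2 t. D1 \<in> cross_states \<Longrightarrow> D2 \<in> cross_states \<Longrightarrow> 0 < t \<Longrightarrow> t < 1 \<Longrightarrow>
      D = (\<lambda>x y. complex_of_real t * D1 x y + complex_of_real (1 - t) * D2 x y) \<Longrightarrow> D1 = D"
    using ext unfolding ext_points_def by blast
  show ?thesis
  proof (cases "D \<in> rank_one_projs")
    case True then show ?thesis .
  next
    case False
    then obtain z c lam D2 where c: "c > 0" and lam: "0 < lam" "lam < 1" and dD2: "density_op D2"
      and u2: "is_ell2 (\<lambda>x. complex_of_real c * D x z)" and nu: "nsq (\<lambda>x. complex_of_real c * D x z) = 1"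
      and Deq: "D = (\<lambda>x y. complex_of_real lam * ((complex_of_real c * D x z) * cnj (complex_of_real c * D y z)) + complex_of_real (1 - lam) * D2 x y)"
      and D2eq: "D2 = (\<lambda>x y. complex_of_real (1 / (1 - lam)) * (D x y + complex_of_real (- lam) * ((complex_of_real c * D x z) * cnj (complex_of_real c * D y z))))"
      using decompose[OF d] by blast
    obtain a b where z: "z = (a, b)" by fastforce
    define P where "P = (\<lambda>x y. (complex_of_real c * D x z) * cnj (complex_of_real c * D y z))"
    have dP: "density_op P" unfolding P_def by (rule rank1_density[OF u2 nu])
    have crosses: "P \<in> cross_states \<and> D2 \<in> cross_states"
    proof (cases "c0 = 0 \<and> (\<exists>(X0::'a \<Rightarrow> 'a \<Rightarrow> complex) (Y0::'b \<Rightarrow> 'b \<Rightarrow> complex). trace_class X0 \<and> trace_class Y0 \<and> \<not> bdd_above (trace_norm_set (tensor_op X0 Y0)))")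
      case True
      then obtain X0 :: "'a \<Rightarrow> 'a \<Rightarrow> complex" and Y0 :: "'b \<Rightarrow> 'b \<Rightarrow> complex"
        where c0: "c0 = 0" and X0: "trace_class X0" and Y0: "trace_class Y0"
          and ub: "\<not> bdd_above (trace_norm_set (tensor_op X0 Y0))" by auto
      show ?thesis using caseA[OF c0 X0 Y0 ub dP] caseA[OF c0 X0 Y0 ub dD2] by blast
    next
      case False
      then have h: "c0 \<noteq> 0 \<or> (\<forall>(X::'a \<Rightarrow> 'a \<Rightarrow> complex) (Y::'b \<Rightarrow> 'b \<Rightarrow> complex). trace_class X \<and> trace_class Y \<longrightarrow> bdd_above (trace_norm_set (tensor_op X Y)))"
        by auto
      obtain r X Y where e: "expn D r X Y" using Dc by (auto simp: cross_iff)
      obtain N0 where N0: "\<And>n. n \<ge> N0 \<Longrightarrow> tcl (\<lambda>u v. D u v - psum r X Y n u v)"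
        using caseB[OF e d h] by blast
      have uu: "uu D a b c = (\<lambda>w. complex_of_real c * D w (a, b))" by (rule uu_def[OF d e N0 c])
      have Pe: "P = (\<lambda>u v. uu D a b c u * cnj (uu D a b c v))" unfolding uu P_def z ..
      have eP: "expn P (rr r X Y a b c) (XX X a) (YY Y b)"
        unfolding Pe by (rule P_expn[OF d e N0 c])
      have tP: "tcl (\<lambda>u v. P u v - psum (rr r X Y a b c) (XX X a) (YY Y b) n u v)" for n
        unfolding Pe by (rule P_rem_tcl[OF d e N0 c])
      have eD2: "expn (\<lambda>u v. complex_of_real (1 / (1 - lam)) * (D u v + complex_of_real (- lam) * P u v))
          (ir2 r (rr r X Y a b c) lam) (iX2 X (XX X a)) (iY2 Y (YY Y b))"
        by (rule interleave_expn[OF e N0 eP tP]) (use lam in auto)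
      have "D2 = (\<lambda>u v. complex_of_real (1 / (1 - lam)) * (D u v + complex_of_real (- lam) * P u v))"
        unfolding D2eq P_def ..
      then have "D2 \<in> cross_states" using eD2 dD2 cross_iff by metis
      moreover have "P \<in> cross_states" using eP dP cross_iff by metis
      ultimately show ?thesis by blast
    qed
    have "D = (\<lambda>x y. complex_of_real lam * P x y + complex_of_real (1 - lam) * D2 x y)"
      using Deq unfolding P_def .
    then have "P = D" using extr[of P D2 lam] crosses lam by blast
    moreover have "P \<in> rank_one_projs"
      unfolding rank_one_projs_def P_def using u2 nu by (auto simp: ell2_norm_nsq)
    ultimately show ?thesis by simp
  qed
qed

theorem corollary6p16:
  shows "ext_points (cross_states :: ('a::countable \<times> 'b::countable \<Rightarrow> 'a \<times> 'b \<Rightarrow> complex) set)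
           = rank_one_projs \<inter> cross_states"
proof
  show "ext_points (cross_states :: ('a::countable \<times> 'b::countable \<Rightarrow> 'a \<times> 'b \<Rightarrow> complex) set)
           \<subseteq> rank_one_projs \<inter> cross_states"
    using extreme_is_pure by (auto simp: ext_points_def)
  show "rank_one_projs \<inter> cross_states
           \<subseteq> ext_points (cross_states :: ('a::countable \<times> 'b::countable \<Rightarrow> 'a \<times> 'b \<Rightarrow> complex) set)"
    using pure_is_extreme by blast
qed


end
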